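(* Consider problem (P) and Algorithm 3.1 as described in the context, and let $\{(x_k,\rho_k,d_k,\xi_k,\lambda_k,r_k,W_k)\}$ be a sequence generated by Algorithm 3.1. Then: (1) For every $k$, $\theta'_{\rho_k,r_k}(x_k;d_k)\le -d_k^TW_kd_k$, and, provided Assumption 3.1 holds, $d_k$ is a descent direction of $\theta_{\rho_k,r_k}$ at $x_k$. (2) Suppose further that Assumption 3.1 holds, that the algorithm does not terminate within finitely many iterations, and that the sequences $\{x_k\}$, $\{\lambda_k\}$ and $\{r_k\}$ are bounded. Then $\bar K:=\{k:\|d_k\|\le\hat\eta\rho_k^{-1}\}$ is an infinite set and every accumulation point of $\{x_k\}_{k\in\bar K}$ is a (Clarke) stationary point of problem (P).
   Context: Problem (P): minimize $f(x)$ subject to $g_i(x)\le 0$ ($i=1,\dots,p$), $h_j(x)=0$ ($j=p+1,\dots,q$), where $f,g_i,h_j:\mathbb{R}^n\to\mathbb{R}$ are locally Lipschitz. $\partial$ denotes the Clarke generalized gradient. For feasible $\bar x$, $I(\bar x)=\{i:g_i(\bar x)=0\}$. A feasible $\bar x$ is a (Clarke) stationary point of (P) if there are $\lambda_i\ge0$ ($i\in I(\bar x)$) and $\lambda_j\in\mathbb{R}$ ($j=p+1,\dots,q$) with $0\in\partial f(\bar x)+\sum_{i\in I(\bar x)}\lambda_i\partial g_i(\bar x)+\sum_{j=p+1}^q\lambda_j\partial h_j(\bar x)$. Smoothing: $\{f_\rho\},\{g^i_\rho\},\{h^j_\rho\}$ ($\rho>0$) are families of continuously differentiable functions with $\lim_{z\to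 x,\rho\uparrow\infty}f_\rho(z)=f(x)$ etc. for all $x$, and (standing assumption) each family has the gradient consistency property: for every $x$, the set of all limits $\lim_k\nabla f_{\rho_k}(z_k)$ with $z_k\to x$, $\rho_k\uparrow\infty$ is nonempty and contained in $\partial f(x)$ (similarly for $g^i_\rho$, $h^j_\rho$). Subproblem $(\mathrm{QP})_k$: minimize over $(d,\xi)\in\mathbb{R}^n\times\mathbb{R}$ the function $\nabla f_{\rho_k}(x_k)^Td+\frac12 d^TW_kd+r_k\xi$ subject to $g^i_{\rho_k}(x_k)+\nabla g^i_{\rho_k}(x_k)^Td\le\xi$ ($i=1,\dots,p$), $h^j_{\rho_k}(x_k)+\nabla h^j_{\rho_k}(x_k)^Td\le\xi$ and $-h^j_{\rho_k}(x_k)-\nabla h^j_{\rho_k}(x_k)^Td\le\xi$ ($j=p+1,\dots,q$), $\xi\ge0$. A solution $(d_k,\xi_k)$ comes with a Lagrange (KKT) multiplier $\lambda_k=(\lambda^g_k,\lambda^+_k,\lambda^-_k,\lambda^\xi_k)\ge0$ satisfying $0=\nabla f_{\rho_k}(x_k)+W_kd_k+\sum_i\lambda^g_{i,k}\nabla g^i_{\rho_k}(x_k)+\sum_j(\lambda^+_{j,k}-\lambda^-_{j,k})\nabla h^j_{\rho_k}(x_k)$, $r_k=\sum_i\lambda^g_{i,k}+\sum_j(\lambda^+_{j,k}+\lambda^-_{j,k})+\lambda^\xi_k$, and complementarity of each multiplier with its constraint. Merit function: $\theta_{\rho,r}(x)=f_\rho(x)+r\phi_\rho(x)$, $\phi_\rho(x)=\max\{0,g^i_\rho(x)\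 (i=1,\dots,p),|h^j_\rho(x)|\ (j=p+1,\dots,q)\}$; $\theta'(x;d)$ is the directional derivative. Algorithm 3.1: constants $\beta,\sigma_1,\sigma_2\in(0,1)$ with $\sigma_1\le\sigma_2$, $\sigma,\sigma',\hat\eta\in(1,\infty)$; initial $x_0$, $\rho_0>0$, $r_0>0$, symmetric positive definite $W_0$; $k:=0$. Step 1: solve $(\mathrm{QP})_k$ to get $(d_k,\xi_k)$ and multiplier $\lambda_k$. Step 2: if $\xi_k=0$ set $r_{k+1}=r_k$, else $r_{k+1}=\sigma'r_k$. Step 3: $x_{k+1}=x_k+\alpha_kd_k$ with $\alpha_k=\beta^l$, $l$ the smallest nonnegative integer with $\theta_{\rho_k,r_k}(x_{k+1})-\theta_{\rho_k,r_k}(x_k)\le-\sigma_1\alpha_kd_k^TW_kd_k$. If $\|d_k\|\le\hat\eta\rho_k^{-1}$, set $\rho_{k+1}=\sigma\rho_k$ and go to Step 4; otherwise set $\rho_{k+1}=\rho_k$ and go to Step 1. In either case choose a symmetric positive definite $W_{k+1}$ and set $k:=k+1$. Step 4: if a stopping criterion holds, terminate; otherwise go to Step 1. Assumption 3.1: there exist constants $0<m<M$ with $m\|d\|^2\le d^TW_kd\le M\|d\|^2$ for all $k$ and all $d\in\mathbb{R}^n$. *)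

theory Defs
  imports "HOL-Analysis.Analysis"
begin

definition loc_lipschitz :: "('a::metric_space \<Rightarrow> real) \<Rightarrow> bool" where
  "loc_lipschitz F \<longleftrightarrow>
     (\<forall>x. \<exists>e>0. \<exists>L. \<forall>y\<in>ball x e. \<forall>z\<in>ball x e. \<bar>F y - F z\<bar> \<le> L * dist y z)"

definition clarke_dir :: "('a::real_normed_vector \<Rightarrow> real) \<Rightarrow> 'a \<Rightarrow> 'a \<Rightarrow> ereal" where
  "clarke_dir F x v =
     Limsup (nhds x \<times>\<^sub>F at_right 0) (\<lambda>(y, t). ereal ((F (y + t *\<^sub>R v) - F y) / t))"

definition clarke_grad :: "('a::real_inner \<Rightarrow> real) \<Rightarrow> 'a \<Rightarrow> 'a set" where
  "clarke_grad F x = {\<zeta>. \<forall>v. ereal (\<zeta> \<bullet> v) \<le> clarke_dir F x v}"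

definition feasible_P :: "nat \<Rightarrow> nat \<Rightarrow> (nat \<Rightarrow> 'a \<Rightarrow> real) \<Rightarrow> (nat \<Rightarrow> 'a \<Rightarrow> real) \<Rightarrow> 'a \<Rightarrow> bool" where
  "feasible_P p q g h x \<longleftrightarrow> (\<forall>i\<in>{1..p}. g i x \<le> 0) \<and> (\<forall>j\<in>{p+1..q}. h j x = 0)"

definition active_set :: "nat \<Rightarrow> (nat \<Rightarrow> 'a \<Rightarrow> real) \<Rightarrow> 'a \<Rightarrow> nat set" where
  "active_set p g x = {i\<in>{1..p}. g i x = 0}"

definition clarke_stationary ::
  "nat \<Rightarrow> nat \<Rightarrow> ('a::real_inner \<Rightarrow> real) \<Rightarrow> (nat \<Rightarrow> 'a \<Rightarrow> real) \<Rightarrow> (nat \<Rightarrow> 'a \<Rightarrow> real) \<Rightarrow> 'a \<Rightarrow> bool" where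
  "clarke_stationary p q f g h x \<longleftrightarrow> feasible_P p q g h x \<and>
     (\<exists>lam mu \<zeta>f \<zeta>g \<zeta>h.
        \<zeta>f \<in> clarke_grad f x \<and>
        (\<forall>i\<in>active_set p g x. lam i \<ge> (0::real) \<and> \<zeta>g i \<in> clarke_grad (g i) x) \<and>
        (\<forall>j\<in>{p+1..q}. \<zeta>h j \<in> clarke_grad (h j) x) \<and>
        \<zeta>f + (\<Sum>i\<in>active_set p g x. lam i *\<^sub>R \<zeta>g i) + (\<Sum>j\<in>{p+1..q}. mu j *\<^sub>R \<zeta>h j) = 0)"

definition smoothing_family ::
  "('a::euclidean_space \<Rightarrow> real) \<Rightarrow> (real \<Rightarrow> 'a \<Rightarrow> real) \<Rightarrow> (real \<Rightarrow> 'a \<Rightarrow> 'a) \<Rightarrow> bool" where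
  "smoothing_family F Fs dFs \<longleftrightarrow>
     (\<forall>\<rho>>0. \<forall>x. (Fs \<rho> has_derivative (\<lambda>v. dFs \<rho> x \<bullet> v)) (at x)) \<and>
     (\<forall>\<rho>>0. continuous_on UNIV (dFs \<rho>)) \<and>
     (\<forall>x. ((\<lambda>(z, \<rho>). Fs \<rho> z) \<longlongrightarrow> F x) (nhds x \<times>\<^sub>F at_top))"

definition grad_limits :: "(real \<Rightarrow> 'a::euclidean_space \<Rightarrow> 'a) \<Rightarrow> 'a \<Rightarrow> 'a set" where
  "grad_limits dFs x = {v. \<exists>z \<rho>. z \<longlonglongrightarrow> x \<and> (\<forall>k. \<rho> k > 0) \<and> filterlim \<rho> at_top sequentially \<and>
                               (\<lambda>k. dFs (\<rho> k) (z k)) \<longlonglongrightarrow> v}"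

definition grad_consistent ::
  "('a::euclidean_space \<Rightarrow> real) \<Rightarrow> (real \<Rightarrow> 'a \<Rightarrow> 'a) \<Rightarrow> bool" where
  "grad_consistent F dFs \<longleftrightarrow> (\<forall>x. grad_limits dFs x \<noteq> {} \<and> grad_limits dFs x \<subseteq> clarke_grad F x)"

definition phi_s :: "nat \<Rightarrow> nat \<Rightarrow> (real \<Rightarrow> nat \<Rightarrow> 'a \<Rightarrow> real) \<Rightarrow> (real \<Rightarrow> nat \<Rightarrow> 'a \<Rightarrow> real) \<Rightarrow> real \<Rightarrow> 'a \<Rightarrow> real" where
  "phi_s p q gs hs \<rho> x =
     Max ({0} \<union> (\<lambda>i. gs \<rho> i x) ` {1..p} \<union> (\<lambda>j. \<bar>hs \<rho> j x\<bar>) ` {p+1..q})"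

definition theta_s :: "nat \<Rightarrow> nat \<Rightarrow> (real \<Rightarrow> 'a \<Rightarrow> real) \<Rightarrow> (real \<Rightarrow> nat \<Rightarrow> 'a \<Rightarrow> real) \<Rightarrow> (real \<Rightarrow> nat \<Rightarrow> 'a \<Rightarrow> real)
                        \<Rightarrow> real \<Rightarrow> real \<Rightarrow> 'a \<Rightarrow> real" where
  "theta_s p q fs gs hs \<rho> r x = fs \<rho> x + r * phi_s p q gs hs \<rho> x"

definition qp_feasible ::
  "nat \<Rightarrow> nat \<Rightarrow> (real \<Rightarrow> nat \<Rightarrow> 'a \<Rightarrow> real) \<Rightarrow> (real \<Rightarrow> nat \<Rightarrow> 'a \<Rightarrow> 'a) \<Rightarrow>
   (real \<Rightarrow> nat \<Rightarrow> 'a \<Rightarrow> real) \<Rightarrow> (real \<Rightarrow> nat \<Rightarrow> 'a \<Rightarrow> 'a) \<Rightarrow> real \<Rightarrow> 'a::real_inner \<Rightarrow> 'a \<Rightarrow> real \<Rightarrow> bool" where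
  "qp_feasible p q gs dgs hs dhs \<rho> x d \<xi> \<longleftrightarrow>
     (\<forall>i\<in>{1..p}. gs \<rho> i x + dgs \<rho> i x \<bullet> d \<le> \<xi>) \<and>
     (\<forall>j\<in>{p+1..q}. hs \<rho> j x + dhs \<rho> j x \<bullet> d \<le> \<xi> \<and> - hs \<rho> j x - dhs \<rho> j x \<bullet> d \<le> \<xi>) \<and>
     \<xi> \<ge> 0"

definition qp_obj :: "(real \<Rightarrow> real ^ ('n::finite) \<Rightarrow> real ^ 'n) \<Rightarrow> real \<Rightarrow> real ^ 'n \<Rightarrow> real ^ 'n ^ 'n \<Rightarrow> real
                       \<Rightarrow> real ^ 'n \<Rightarrow> real \<Rightarrow> real" where
  "qp_obj dfs \<rho> x W r d \<xi> = dfs \<rho> x \<bullet> d + 1/2 * (d \<bullet> (W *v d)) + r * \<xi>"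

end

theory Submission
  imports Defs
begin

definition dd :: "(real \<Rightarrow> real) \<Rightarrow> real \<Rightarrow> bool" where
  "dd u a \<longleftrightarrow> ((\<lambda>t. (u t - u 0) / t) \<longlongrightarrow> a) (at_right 0)"

lemma dd_cont: assumes "dd u a" shows "(u \<longlongrightarrow> u 0) (at_right 0)"
proof -
  have "((\<lambda>t. u 0 + t * ((u t - u 0) / t)) \<longlongrightarrow> u 0 + 0 * a) (at_right 0)"
    using assms unfolding dd_def
    by (intro tendsto_intros) (auto intro: tendsto_mono[OF at_le])
  moreover have "eventually (\<lambda>t. u 0 + t * ((u t - u 0) / t) = u t) (at_right 0)"
    using eventually_at_right_less[of "0::real"] by eventually_elim auto
  ultimately show ?thesis by (auto intro: Lim_transform_eventually)
qed

lemma dd_max: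
  assumes "dd u a" "dd v b"
  shows "dd (\<lambda>t. max (u t) (v t)) (if u 0 > v 0 then a else if v 0 > u 0 then b else max a b)"
proof (cases "u 0 > v 0")
  case True
  have "((\<lambda>t. u t - v t) \<longlongrightarrow> u 0 - v 0) (at_right 0)"
    using dd_cont[OF assms(1)] dd_cont[OF assms(2)] by (intro tendsto_intros)
  note lim = this
  have ev: "eventually (\<lambda>t. u t - v t > 0) (at_right 0)"
    using order_tendstoD(1)[OF lim, of 0] True by simp
  have "eventually (\<lambda>t. (u t - u 0) / t = (max (u t) (v t) - max (u 0) (v 0)) / t) (at_right 0)"
    using ev by eventually_elim (use True in auto)
  with assms(1) show ?thesis using True unfolding dd_def
    by (auto intro: Lim_transform_eventually)
next
  case F: False
  show ?thesis
  proof (cases "v 0 > u 0")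
    case True
    have "((\<lambda>t. v t - u t) \<longlongrightarrow> v 0 - u 0) (at_right 0)"
      using dd_cont[OF assms(1)] dd_cont[OF assms(2)] by (intro tendsto_intros)
    note lim = this
    have ev: "eventually (\<lambda>t. v t - u t > 0) (at_right 0)"
      using order_tendstoD(1)[OF lim, of 0] True by simp
    have "eventually (\<lambda>t. (v t - v 0) / t = (max (u t) (v t) - max (u 0) (v 0)) / t) (at_right 0)"
      using ev by eventually_elim (use True in auto)
    with assms(2) show ?thesis using True unfolding dd_def
      by (auto intro: Lim_transform_eventually)
  next
    case False
    then have eq: "u 0 = v 0" using F by auto
    have "((\<lambda>t. max ((u t - u 0) / t) ((v t - v 0) / t)) \<longlongrightarrow> max a b) (at_right 0)"
      using assms unfolding dd_def by (intro tendsto_intros)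
    moreover have "eventually (\<lambda>t. max ((u t - u 0) / t) ((v t - v 0) / t)
        = (max (u t) (v t) - max (u 0) (v 0)) / t) (at_right 0)"
      using eventually_at_right_less[of "0::real"] 
    proof eventually_elim
      case (elim t)
      then show ?case using eq by (auto simp: max_def divide_right_mono field_simps)
    qed
    ultimately show ?thesis using F False unfolding dd_def
      by (auto intro: Lim_transform_eventually)
  qed
qed

lemma dd_abs:
  assumes "dd u a"
  shows "dd (\<lambda>t. \<bar>u t\<bar>) (if u 0 > 0 then a else if u 0 < 0 then - a else \<bar>a\<bar>)"
proof -
  have neg: "dd (\<lambda>t. - u t) (- a)"
    using tendsto_minus[OF assms(1)[unfolded dd_def]] unfolding dd_def
    by (simp add: minus_divide_left minus_diff_eq)
  have fe: "(\<lambda>t. max (u t) (- u t)) = (\<lambda>t. \<bar>u t\<bar>)" by (auto simp: fun_eq_iff)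
  have "(if u 0 > - u 0 then a else if - u 0 > u 0 then - a else max a (- a))
     = (if u 0 > 0 then a else if u 0 < 0 then - a else \<bar>a\<bar>)" by auto
  with dd_max[OF assms(1) neg] show ?thesis unfolding fe by simp
qed

lemma dd_Max:
  assumes "finite J" "J \<noteq> {}" "\<And>j. j \<in> J \<Longrightarrow> dd (c j) (a j)"
  shows "\<exists>D. dd (\<lambda>t. Max ((\<lambda>j. c j t) ` J)) D \<and>
    (\<forall>B. (\<forall>j\<in>J. c j 0 = Max ((\<lambda>j. c j 0) ` J) \<longrightarrow> a j \<le> B) \<longrightarrow> D \<le> B)"
  using assms
proof (induction J rule: finite_ne_induct)
  case (singleton j)
  then show ?case by (auto intro!: exI[of _ "a j"])
next
  case (insert j J)
  from insert.IH insert.prems obtain DJ where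
    DJ: "dd (\<lambda>t. Max ((\<lambda>j. c j t) ` J)) DJ"
    and DJb: "\<And>B. (\<forall>j\<in>J. c j 0 = Max ((\<lambda>j. c j 0) ` J) \<longrightarrow> a j \<le> B) \<Longrightarrow> DJ \<le> B" by auto
  have cj: "dd (c j) (a j)" using insert.prems by auto
  have eqf: "(\<lambda>t. Max ((\<lambda>j. c j t) ` insert j J)) = (\<lambda>t. max (c j t) (Max ((\<lambda>j. c j t) ` J)))"
    using insert.hyps by (auto simp: fun_eq_iff)
  define M where "M = Max ((\<lambda>j. c j 0) ` J)"
  have M0: "Max ((\<lambda>j. c j 0) ` insert j J) = max (c j 0) M"
    using insert.hyps by (simp add: M_def)
  from dd_max[OF cj DJ] have dm: "dd (\<lambda>t. Max ((\<lambda>j. c j t) ` insert j J))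
     (if c j 0 > M then a j else if M > c j 0 then DJ else max (a j) DJ)"
    unfolding eqf M_def by simp
  show ?case
  proof (intro exI conjI allI impI)
    show "dd (\<lambda>t. Max ((\<lambda>j. c j t) ` insert j J))
     (if c j 0 > M then a j else if M > c j 0 then DJ else max (a j) DJ)" by (fact dm)
  next
    fix B assume H: "\<forall>i\<in>insert j J. c i 0 = Max ((\<lambda>j. c j 0) ` insert j J) \<longrightarrow> a i \<le> B"
    show "(if c j 0 > M then a j else if M > c j 0 then DJ else max (a j) DJ) \<le> B"
    proof (cases "c j 0 > M")
      case True then show ?thesis using H M0 by auto
    next
      case False
      have "DJ \<le> B" if "M \<ge> c j 0"
        using H M0 that by (intro DJb) (auto simp: M_def max_def)
      then show ?thesis using False H M0 by (auto simp: max_def)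
    qed
  qed
qed

lemma key_ineq:
  fixes df dd' :: "real ^ 'n" and W :: "real ^ 'n ^ 'n" and G H :: "nat \<Rightarrow> real ^ 'n"
    and gv hv lg lp lm :: "nat \<Rightarrow> real"
  assumes kkt: "df + W *v dd' + (\<Sum>i\<in>I. lg i *\<^sub>R G i) + (\<Sum>j\<in>J. (lp j - lm j) *\<^sub>R H j) = 0"
    and sg: "\<forall>i\<in>I. lg i \<ge> 0" "\<forall>j\<in>J. lp j \<ge> 0 \<and> lm j \<ge> 0" "lxi \<ge> 0"
    and cg: "\<forall>i\<in>I. lg i * (gv i + G i \<bullet> dd' - \<xi>) = 0"
    and ch: "\<forall>j\<in>J. lp j * (hv j + H j \<bullet> dd' - \<xi>) = 0 \<and> lm j * (- hv j - H j \<bullet> dd' - \<xi>) = 0"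
    and cx: "lxi * \<xi> = 0"
    and r: "r = (\<Sum>i\<in>I. lg i) + (\<Sum>j\<in>J. lp j + lm j) + lxi"
    and phg: "\<forall>i\<in>I. gv i \<le> ph" and phh: "\<forall>j\<in>J. \<bar>hv j\<bar> \<le> ph" and ph0: "ph \<ge> 0"
  shows "df \<bullet> dd' + r * (\<xi> - ph) \<le> - (dd' \<bullet> (W *v dd'))"
proof -
  have "(df + W *v dd' + (\<Sum>i\<in>I. lg i *\<^sub>R G i) + (\<Sum>j\<in>J. (lp j - lm j) *\<^sub>R H j)) \<bullet> dd' = 0"
    using kkt by simp
  then have e0: "df \<bullet> dd' + (W *v dd') \<bullet> dd' + (\<Sum>i\<in>I. lg i * (G i \<bullet> dd')) + (\<Sum>j\<in>J. (lp j - lm j) * (H j \<bullet> dd')) = 0"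
    by (simp add: inner_add_left inner_sum_left)
  have "(W *v dd') \<bullet> dd' = dd' \<bullet> (W *v dd')" by (rule inner_commute)
  with e0 have e: "df \<bullet> dd' + dd' \<bullet> (W *v dd') + (\<Sum>i\<in>I. lg i * (G i \<bullet> dd')) + (\<Sum>j\<in>J. (lp j - lm j) * (H j \<bullet> dd')) = 0"
    by simp
  have s1: "(\<Sum>i\<in>I. lg i * (G i \<bullet> dd')) \<ge> (\<Sum>i\<in>I. lg i * (\<xi> - ph))"
  proof (rule sum_mono)
    fix i assume i: "i \<in> I"
    have "lg i * (G i \<bullet> dd') = lg i * (\<xi> - gv i)" using cg i by (auto simp: algebra_simps)
    also have "\<dots> \<ge> lg i * (\<xi> - ph)" using sg(1) phg i by (auto intro: mult_left_mono)
    finally show "lg i * (\<xi> - ph) \<le> lg i * (G i \<bullet> dd')" .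
  qed
  have s2: "(\<Sum>j\<in>J. (lp j - lm j) * (H j \<bullet> dd')) \<ge> (\<Sum>j\<in>J. (lp j + lm j) * (\<xi> - ph))"
  proof (rule sum_mono)
    fix j assume j: "j \<in> J"
    have "(lp j - lm j) * (H j \<bullet> dd') = lp j * (\<xi> - hv j) + lm j * (hv j + \<xi>)"
      using ch j by (auto simp: algebra_simps)
    also have "\<dots> \<ge> lp j * (\<xi> - ph) + lm j * (\<xi> - ph)"
    proof -
      have "\<xi> - hv j \<ge> \<xi> - ph" "hv j + \<xi> \<ge> \<xi> - ph" using phh j by auto
      then show ?thesis using sg(2) j by (auto intro!: add_mono mult_left_mono)
    qed
    finally show "(lp j + lm j) * (\<xi> - ph) \<le> (lp j - lm j) * (H j \<bullet> dd')" by (simp add: algebra_simps)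
  qed
  have "r * (\<xi> - ph) = (\<Sum>i\<in>I. lg i * (\<xi> - ph)) + (\<Sum>j\<in>J. (lp j + lm j) * (\<xi> - ph)) + lxi * (\<xi> - ph)"
    unfolding r by (simp add: sum_distrib_right distrib_left distrib_right)
  moreover have "lxi * (\<xi> - ph) \<le> 0" using cx sg(3) ph0 by (auto simp: algebra_simps)
  ultimately show ?thesis using e s1 s2 by linarith
qed

lemma dd_smooth:
  assumes "(F has_derivative (\<lambda>v. G \<bullet> v)) (at x)"
  shows "dd (\<lambda>t. F (x + t *\<^sub>R d)) (G \<bullet> d)"
proof -
  have l: "((\<lambda>t. x + t *\<^sub>R d) has_derivative (\<lambda>t. t *\<^sub>R d)) (at 0)"
    by (auto intro!: derivative_eq_intros)
  have a: "(F has_derivative (\<lambda>v. G \<bullet> v)) (at ((\<lambda>t. x + t *\<^sub>R d) 0))" using assms by simp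
  have "((\<lambda>t. F (x + t *\<^sub>R d)) has_derivative (\<lambda>t. G \<bullet> (t *\<^sub>R d))) (at 0)"
    using has_derivative_compose[OF l a] by simp
  then have "((\<lambda>t. F (x + t *\<^sub>R d)) has_real_derivative (G \<bullet> d)) (at 0)"
    by (simp add: has_field_derivative_def mult.commute[of _ "G \<bullet> d"])
  then have "((\<lambda>t. F (x + t *\<^sub>R d)) has_real_derivative (G \<bullet> d)) (at 0 within {0<..})"
    by (rule has_field_derivative_at_within)
  then show ?thesis unfolding dd_def has_field_derivative_iff by simp
qed

definition compf :: "nat \<Rightarrow> (real \<Rightarrow> nat \<Rightarrow> 'a \<Rightarrow> real) \<Rightarrow> (real \<Rightarrow> nat \<Rightarrow> 'a \<Rightarrow> real) \<Rightarrow> real \<Rightarrow> 'a \<Rightarrow> nat \<Rightarrow> real" where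
  "compf p gs hs \<rho> y j = (if j = 0 then 0 else if j \<le> p then gs \<rho> j y else \<bar>hs \<rho> j y\<bar>)"

lemma phi_eq: assumes "p \<le> q"
  shows "phi_s p q gs hs \<rho> y = Max (compf p gs hs \<rho> y ` {0..q})"
proof -
  have "{0..q} = {0} \<union> {1..p} \<union> {p+1..q}" using assms by auto
  then have "compf p gs hs \<rho> y ` {0..q} = {0} \<union> (\<lambda>i. gs \<rho> i y) ` {1..p} \<union> (\<lambda>j. \<bar>hs \<rho> j y\<bar>) ` {p+1..q}"
    by (auto simp: compf_def image_Un)
  then show ?thesis by (simp add: phi_s_def)
qed

lemma phi_ge:
  shows "i \<in> {1..p} \<Longrightarrow> gs \<rho> i y \<le> phi_s p q gs hs \<rho> y"
    and "j \<in> {p+1..q} \<Longrightarrow> \<bar>hs \<rho> j y\<bar> \<le> phi_s p q gs hs \<rho> y"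
    and "0 \<le> phi_s p q gs hs \<rho> y"
  unfolding phi_s_def by (rule Max_ge; auto)+

lemma dd_const: "dd (\<lambda>t. c) 0" unfolding dd_def by simp

lemma dd_add: "dd u a \<Longrightarrow> dd v b \<Longrightarrow> dd (\<lambda>t. u t + r * v t) (a + r * b)"
proof -
  assume "dd u a" "dd v b"
  then have "((\<lambda>t. (u t - u 0) / t + r * ((v t - v 0) / t)) \<longlongrightarrow> a + r * b) (at_right 0)"
    unfolding dd_def by (intro tendsto_intros)
  then show ?thesis unfolding dd_def by (simp add: add_divide_distrib diff_divide_distrib algebra_simps)
qed

lemma part1_k:
  fixes fs :: "real \<Rightarrow> real ^ 'n \<Rightarrow> real" and dfs :: "real \<Rightarrow> real ^ 'n \<Rightarrow> real ^ 'n"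
    and gs hs :: "real \<Rightarrow> nat \<Rightarrow> real ^ 'n \<Rightarrow> real"
    and dgs dhs :: "real \<Rightarrow> nat \<Rightarrow> real ^ 'n \<Rightarrow> real ^ 'n"
    and x d :: "real ^ 'n" and W :: "real ^ 'n ^ 'n" and lg lp lm :: "nat \<Rightarrow> real"
  assumes pq: "p \<le> q"
    and df: "(fs \<rho> has_derivative (\<lambda>v. dfs \<rho> x \<bullet> v)) (at x)"
    and dg: "\<forall>i\<in>{1..p}. ((\<lambda>y. gs \<rho> i y) has_derivative (\<lambda>v. dgs \<rho> i x \<bullet> v)) (at x)"
    and dh: "\<forall>j\<in>{p+1..q}. ((\<lambda>y. hs \<rho> j y) has_derivative (\<lambda>v. dhs \<rho> j x \<bullet> v)) (at x)"
    and feas: "qp_feasible p q gs dgs hs dhs \<rho> x d \<xi>"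
    and kkt: "dfs \<rho> x + W *v d + (\<Sum>i\<in>{1..p}. lg i *\<^sub>R dgs \<rho> i x)
                    + (\<Sum>j\<in>{p+1..q}. (lp j - lm j) *\<^sub>R dhs \<rho> j x) = 0"
    and sg: "\<forall>i\<in>{1..p}. lg i \<ge> 0" "\<forall>j\<in>{p+1..q}. lp j \<ge> 0 \<and> lm j \<ge> 0" "lxi \<ge> 0"
    and cg: "\<forall>i\<in>{1..p}. lg i * (gs \<rho> i x + dgs \<rho> i x \<bullet> d - \<xi>) = 0"
    and ch: "\<forall>j\<in>{p+1..q}. lp j * (hs \<rho> j x + dhs \<rho> j x \<bullet> d - \<xi>) = 0 \<and>
                                      lm j * (- hs \<rho> j x - dhs \<rho> j x \<bullet> d - \<xi>) = 0"
    and cx: "lxi * \<xi> = 0"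
    and r: "r = (\<Sum>i\<in>{1..p}. lg i) + (\<Sum>j\<in>{p+1..q}. lp j + lm j) + lxi"
  shows "\<exists>D. ((\<lambda>t. (theta_s p q fs gs hs \<rho> r (x + t *\<^sub>R d) - theta_s p q fs gs hs \<rho> r x) / t) \<longlongrightarrow> D) (at_right 0)
           \<and> D \<le> - (d \<bullet> (W *v d))"
proof -
  define c where "c j t = compf p gs hs \<rho> (x + t *\<^sub>R d) j" for j t
  define a where "a j = (if j = 0 then 0 else if j \<le> p then dgs \<rho> j x \<bullet> d else
      (if hs \<rho> j x > 0 then dhs \<rho> j x \<bullet> d else if hs \<rho> j x < 0 then - (dhs \<rho> j x \<bullet> d) else \<bar>dhs \<rho> j x \<bullet> d\<bar>))" for j
  have ddc: "dd (c j) (a j)" if j: "j \<in> {0..q}" for j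
  proof (cases "j = 0")
    case True
    have "c 0 = (\<lambda>t. 0)" by (simp add: c_def compf_def fun_eq_iff)
    then show ?thesis using True by (simp add: a_def dd_const)
  next
    case F: False
    show ?thesis
    proof (cases "j \<le> p")
      case True
      then have "j \<in> {1..p}" using F by auto
      have ce: "c j = (\<lambda>t. gs \<rho> j (x + t *\<^sub>R d))" using F True by (simp add: c_def compf_def fun_eq_iff)
      show ?thesis using dd_smooth[of "\<lambda>y. gs \<rho> j y" "dgs \<rho> j x" x d] dg F True \<open>j \<in> {1..p}\<close>
        unfolding ce by (simp add: a_def)
    next
      case False
      then have "j \<in> {p+1..q}" using j by auto
      then have ddh: "dd (\<lambda>t. hs \<rho> j (x + t *\<^sub>R d)) (dhs \<rho> j x \<bullet> d)" using dd_smooth dh by blast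
      have ce: "c j = (\<lambda>t. \<bar>hs \<rho> j (x + t *\<^sub>R d)\<bar>)" using F False by (simp add: c_def compf_def fun_eq_iff)
      have h0: "hs \<rho> j (x + 0 *\<^sub>R d) = hs \<rho> j x" by simp
      have "dd (c j) (if 0 < hs \<rho> j x then dhs \<rho> j x \<bullet> d else if hs \<rho> j x < 0 then - (dhs \<rho> j x \<bullet> d) else \<bar>dhs \<rho> j x \<bullet> d\<bar>)"
        using dd_abs[OF ddh] unfolding ce h0 .
      then show ?thesis using F False by (simp add: a_def)
    qed
  qed
  define ph where "ph = phi_s p q gs hs \<rho> x"
  have c0: "c j 0 = compf p gs hs \<rho> x j" for j by (simp add: c_def)
  have ph_eq: "Max ((\<lambda>j. c j 0) ` {0..q}) = ph" unfolding c0 ph_def phi_eq[OF pq] by simp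
  obtain Dp where Dp: "dd (\<lambda>t. Max ((\<lambda>j. c j t) ` {0..q})) Dp"
    and Dpb: "\<And>B. (\<forall>j\<in>{0..q}. c j 0 = Max ((\<lambda>j. c j 0) ` {0..q}) \<longrightarrow> a j \<le> B) \<Longrightarrow> Dp \<le> B"
    using dd_Max[of "{0..q}" c a] ddc by auto
  have Dple: "Dp \<le> \<xi> - ph"
  proof (rule Dpb, intro ballI impI)
    fix j assume j: "j \<in> {0..q}" and act: "c j 0 = Max ((\<lambda>j. c j 0) ` {0..q})"
    then have act': "compf p gs hs \<rho> x j = ph" using ph_eq c0 by simp
    show "a j \<le> \<xi> - ph"
    proof (cases "j = 0")
      case True then show ?thesis using act' feas by (simp add: a_def compf_def qp_feasible_def)
    next
      case F: False
      show ?thesis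
      proof (cases "j \<le> p")
        case True
        then have "j \<in> {1..p}" using F by auto
        then have "gs \<rho> j x + dgs \<rho> j x \<bullet> d \<le> \<xi>" using feas by (auto simp: qp_feasible_def)
        then show ?thesis using act' F True by (auto simp: a_def compf_def)
      next
        case False
        then have jj: "j \<in> {p+1..q}" using j by auto
        then have "hs \<rho> j x + dhs \<rho> j x \<bullet> d \<le> \<xi>" "- hs \<rho> j x - dhs \<rho> j x \<bullet> d \<le> \<xi>"
          using feas by (auto simp: qp_feasible_def)
        then show ?thesis using act' F False by (auto simp: a_def compf_def)
      qed
    qed
  qed
  have th: "theta_s p q fs gs hs \<rho> r (x + t *\<^sub>R d) = fs \<rho> (x + t *\<^sub>R d) + r * Max ((\<lambda>j. c j t) ` {0..q})" for t
    by (simp add: theta_s_def phi_eq[OF pq] c_def)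
  have ddf: "dd (\<lambda>t. fs \<rho> (x + t *\<^sub>R d)) (dfs \<rho> x \<bullet> d)" using dd_smooth[OF df] .
  from dd_add[OF ddf Dp, of r] have "dd (\<lambda>t. theta_s p q fs gs hs \<rho> r (x + t *\<^sub>R d)) (dfs \<rho> x \<bullet> d + r * Dp)"
    unfolding th .
  then have lim: "((\<lambda>t. (theta_s p q fs gs hs \<rho> r (x + t *\<^sub>R d) - theta_s p q fs gs hs \<rho> r x) / t) \<longlongrightarrow> dfs \<rho> x \<bullet> d + r * Dp) (at_right 0)"
    unfolding dd_def by simp
  have r0: "r \<ge> 0" unfolding r using sg by (auto intro!: sum_nonneg add_nonneg_nonneg)
  have "dfs \<rho> x \<bullet> d + r * Dp \<le> dfs \<rho> x \<bullet> d + r * (\<xi> - ph)"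
    using Dple r0 by (auto intro: mult_left_mono)
  also have "\<dots> \<le> - (d \<bullet> (W *v d))"
    by (rule key_ineq[OF kkt sg cg ch cx r]) (auto simp: ph_def phi_ge)
  finally show ?thesis using lim by blast
qed

lemma grow_at_top:
  fixes u :: "nat \<Rightarrow> real"
  assumes upd: "\<And>k. u (Suc k) = (if P k then c * u k else u k)" and c: "c > 1" and u0: "u 0 > 0"
    and inf: "infinite {k. P k}"
  shows "filterlim u at_top sequentially"
proof -
  have pos: "u k > 0" for k by (induction k) (use upd c u0 in auto)
  have step: "u k \<le> u (Suc k)" for k using upd[of k] pos[of k] c by auto
  then have inc: "incseq u" by (rule incseq_SucI)
  have big: "\<exists>k. u k \<ge> u 0 * c ^ n" for n
  proof (induction n)
    case 0 then show ?case by auto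
  next
    case (Suc n)
    then obtain k where k: "u k \<ge> u 0 * c ^ n" by auto
    from inf obtain k' where k': "k' \<ge> k" "P k'" unfolding infinite_nat_iff_unbounded_le by auto
    have "u (Suc k') = c * u k'" using upd k' by auto
    moreover have "u k' \<ge> u k" using inc k' by (auto simp: incseq_def)
    ultimately have "u (Suc k') \<ge> c * (u 0 * c ^ n)" using k c by (auto intro: mult_left_mono)
    then show ?case by (auto simp: algebra_simps)
  qed
  show ?thesis
  proof (subst filterlim_at_top, intro allI)
    fix Z :: real
    obtain n where n: "Z / u 0 < c ^ n" using real_arch_pow[OF c] by auto
    then have "Z < u 0 * c ^ n" using u0 by (simp add: field_simps)
    obtain k where "u k \<ge> u 0 * c ^ n" using big by auto
    then have "\<forall>m\<ge>k. Z \<le> u m" using inc \<open>Z < u 0 * c ^ n\<close> unfolding incseq_def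
      by (meson less_imp_le order_trans)
    then show "eventually (\<lambda>m. Z \<le> u m) sequentially" unfolding eventually_sequentially by auto
  qed
qed

lemma W_bound:
  fixes W :: "real ^ 'n ^ 'n"
  assumes sym: "transpose W = W" and psd: "\<And>v. 0 \<le> v \<bullet> (W *v v)"
    and ub: "\<And>v. v \<bullet> (W *v v) \<le> M * norm v ^ 2"
  shows "norm (W *v v) \<le> M * norm v"
proof -
  have symm: "a \<bullet> (W *v b) = b \<bullet> (W *v a)" for a b
  proof -
    have "a \<bullet> (W *v b) = (a v* W) \<bullet> b" by (simp add: dot_lmul_matrix)
    also have "a v* W = transpose W *v a" by simp
    finally show ?thesis using sym by (simp add: inner_commute)
  qed
  have pol: "4 * (a \<bullet> (W *v b)) = (a + b) \<bullet> (W *v (a + b)) - (a - b) \<bullet> (W *v (a - b))" for a b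
    using symm[of a b] by (simp add: matrix_vector_right_distrib matrix_vector_mult_diff_distrib
        inner_add_left inner_add_right inner_diff_left inner_diff_right)
  have M0: "M \<ge> 0"
  proof (rule ccontr)
    assume "\<not> M \<ge> 0"
    obtain a :: "real ^ 'n" where "a \<noteq> 0" using zero_neq_one[where 'a="real ^ 'n"] by blast
    then have "M * norm a ^ 2 < 0" using \<open>\<not> M \<ge> 0\<close> by (simp add: mult_neg_pos)
    with psd[of a] ub[of a] show False by linarith
  qed
  have cs: "2 * (a \<bullet> (W *v b)) \<le> M * (norm a ^ 2 + norm b ^ 2)" for a b
  proof -
    have "4 * (a \<bullet> (W *v b)) \<le> M * norm (a + b) ^ 2" using pol[of a b] psd[of "a - b"] ub[of "a + b"] by linarith
    also have "\<dots> \<le> M * (2 * (norm a ^ 2 + norm b ^ 2))"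
    proof -
      have "norm (a + b) ^ 2 \<le> 2 * (norm a ^ 2 + norm b ^ 2)"
      proof -
        have "norm (a + b) ^ 2 + norm (a - b) ^ 2 = 2 * (norm a ^ 2 + norm b ^ 2)"
          by (simp add: power2_norm_eq_inner inner_add_left inner_add_right inner_diff_left inner_diff_right inner_commute)
        then show ?thesis by (smt (verit) zero_le_power2)
      qed
      from this M0 show ?thesis by (rule mult_left_mono)
    qed
    finally show ?thesis by (simp add: algebra_simps)
  qed
  show ?thesis
  proof (cases "W *v v = 0")
    case True then show ?thesis using M0 by simp
  next
    case False
    define w where "w = W *v v"
    have nw: "norm w > 0" using False w_def by simp
    show ?thesis
    proof (cases "v = 0")
      case True then show ?thesis using False by simp
    next
      case vF: False
      define c where "c = norm v / norm w"
      have c0: "c > 0" using nw vF by (simp add: c_def)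
      have "2 * ((c *\<^sub>R w) \<bullet> (W *v v)) \<le> M * (norm (c *\<^sub>R w) ^ 2 + norm v ^ 2)" by (rule cs)
      then have "2 * c * norm w ^ 2 \<le> M * (c ^ 2 * norm w ^ 2 + norm v ^ 2)"
        using c0 by (simp add: w_def power2_norm_eq_inner[symmetric] power_mult_distrib)
      also have "c ^ 2 * norm w ^ 2 = norm v ^ 2" using nw by (simp add: c_def power_divide)
      finally have "2 * c * norm w ^ 2 \<le> 2 * M * norm v ^ 2" by simp
      then have "norm v * norm w \<le> M * norm v ^ 2" using nw by (simp add: c_def power2_eq_square field_simps)
      then have "norm w \<le> M * norm v" using vF by (simp add: power2_eq_square)
      then show ?thesis by (simp add: w_def)
    qed
  qed
qed

lemma smooth_seq:
  assumes "smoothing_family F Fs dFs" "z \<longlonglongrightarrow> x" "filterlim \<rho> at_top sequentially"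
  shows "(\<lambda>k. Fs (\<rho> k) (z k)) \<longlonglongrightarrow> F x"
proof -
  have l: "((\<lambda>(z, \<rho>). Fs \<rho> z) \<longlongrightarrow> F x) (nhds x \<times>\<^sub>F at_top)"
    using assms(1) unfolding smoothing_family_def by auto
  have "filterlim (\<lambda>k. (z k, \<rho> k)) (nhds x \<times>\<^sub>F at_top) sequentially"
    using assms(2,3) by (rule filterlim_Pair)
  from filterlim_compose[OF l this] show ?thesis by simp
qed

lemma fin_subseq:
  fixes X :: "'i \<Rightarrow> nat \<Rightarrow> 'a::heine_borel"
  assumes "finite I" "\<forall>i\<in>I. bounded (range (X i))"
  shows "\<exists>s. strict_mono s \<and> (\<forall>i\<in>I. \<exists>l. (X i \<circ> s) \<longlonglongrightarrow> l)"
  using assms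
proof (induction I rule: finite_induct)
  case empty
  then show ?case by (auto intro: exI[of _ id] simp: strict_mono_def)
next
  case (insert i I)
  have "\<exists>s. strict_mono s \<and> (\<forall>i\<in>I. \<exists>l. (X i \<circ> s) \<longlonglongrightarrow> l)" using insert.IH insert.prems by blast
  then obtain s where s: "strict_mono s" "\<forall>i\<in>I. \<exists>l. (X i \<circ> s) \<longlonglongrightarrow> l" by auto
  have "bounded (range (X i \<circ> s))"
    using insert.prems by (auto intro: bounded_subset)
  then obtain l s' where s': "strict_mono s'" "((X i \<circ> s) \<circ> s') \<longlonglongrightarrow> l"
    using bounded_imp_convergent_subsequence by blast
  have "strict_mono (s \<circ> s')" using s(1) s'(1) by (rule strict_mono_o)
  moreover have "\<forall>j\<in>insert i I. \<exists>l. (X j \<circ> (s \<circ> s')) \<longlonglongrightarrow> l"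
  proof
    fix j assume "j \<in> insert i I"
    then show "\<exists>l. (X j \<circ> (s \<circ> s')) \<longlonglongrightarrow> l"
    proof
      assume "j = i" then show ?thesis using s'(2) by (auto simp: o_assoc)
    next
      assume "j \<in> I"
      then obtain l where "(X j \<circ> s) \<longlonglongrightarrow> l" using s(2) by auto
      from LIMSEQ_subseq_LIMSEQ[OF this s'(1)] show ?thesis by (auto simp: o_assoc)
    qed
  qed
  ultimately show ?case by blast
qed

lemma lip_cont:
  assumes "loc_lipschitz (F :: 'a::metric_space \<Rightarrow> real)"
  shows "continuous_on UNIV F"
proof (rule continuous_at_imp_continuous_on, intro ballI)
  fix x :: 'a
  obtain e L where e: "e > 0" and L: "\<forall>y\<in>ball x e. \<forall>z\<in>ball x e. \<bar>F y - F z\<bar> \<le> L * dist y z"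
    using assms unfolding loc_lipschitz_def by blast
  show "isCont F x" unfolding continuous_at_eps_delta
  proof (intro allI impI)
    fix \<epsilon> :: real assume \<epsilon>: "\<epsilon> > 0"
    define \<delta> where "\<delta> = min e (\<epsilon> / (\<bar>L\<bar> + 1))"
    have \<delta>: "\<delta> > 0" using e \<epsilon> by (simp add: \<delta>_def)
    have "dist (F y) (F x) < \<epsilon>" if y: "dist y x < \<delta>" for y
    proof -
      have "y \<in> ball x e" "x \<in> ball x e" using y e by (auto simp: \<delta>_def dist_commute)
      then have "\<bar>F y - F x\<bar> \<le> L * dist y x" using L by blast
      also have "\<dots> \<le> \<bar>L\<bar> * dist y x" by (simp add: mult_right_mono)
      also have "\<dots> \<le> \<bar>L\<bar> * \<delta>" using y by (simp add: mult_left_mono)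
      also have "\<dots> < \<epsilon>"
      proof -
        have "\<bar>L\<bar> * \<delta> \<le> \<bar>L\<bar> * (\<epsilon> / (\<bar>L\<bar> + 1))" unfolding \<delta>_def by (intro mult_left_mono) auto
        also have "\<dots> < \<epsilon>" using \<epsilon> by (simp add: field_simps)
        finally show ?thesis .
      qed
      finally show ?thesis by (simp add: dist_real_def)
    qed
    then show "\<exists>\<delta>>0. \<forall>y. dist y x < \<delta> \<longrightarrow> dist (F y) (F x) < \<epsilon>" using \<delta> by blast
  qed
qed

lemma clarke_bound:
  fixes F :: "'a::real_inner \<Rightarrow> real"
  assumes "loc_lipschitz F"
  shows "\<exists>L. \<forall>\<zeta>\<in>clarke_grad F x. norm \<zeta> \<le> L"
proof -
  obtain e L where e: "e > 0" and L: "\<forall>y\<in>ball x e. \<forall>z\<in>ball x e. \<bar>F y - F z\<bar> \<le> L * dist y z"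
    using assms unfolding loc_lipschitz_def by blast
  have cd: "clarke_dir F x v \<le> ereal (\<bar>L\<bar> * norm v)" for v
    unfolding clarke_dir_def
  proof (rule Limsup_bounded, unfold eventually_prod_filter, intro exI conjI allI impI)
    show "eventually (\<lambda>y. dist y x < e / 2) (nhds x)"
      unfolding eventually_nhds_metric using e by (intro exI[of _ "e/2"]) auto
    show "eventually (\<lambda>t. 0 < t \<and> t < e / (2 * (norm v + 1))) (at_right (0::real))"
      unfolding eventually_at_right_field using e
      by (intro exI[of _ "e / (2 * (norm v + 1))"]) (auto intro!: divide_pos_pos add_nonneg_pos)
    fix y and t :: real
    assume y: "dist y x < e / 2" and t: "0 < t \<and> t < e / (2 * (norm v + 1))"
    have "t * norm v \<le> e / 2"
    proof -
      have "t * norm v \<le> t * (norm v + 1)" using t by simp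
      also have "\<dots> \<le> e / 2"
      proof -
        have "t * (2 * (norm v + 1)) < e" using t pos_less_divide_eq[of "2*(norm v+1)" t e]
          by (simp add: add_nonneg_pos)
        then show ?thesis by (simp add: algebra_simps)
      qed
      finally show ?thesis .
    qed
    then have "dist (y + t *\<^sub>R v) x < e"
      using y t dist_triangle[of "y + t *\<^sub>R v" x y] by (simp add: dist_norm)
    then have "y + t *\<^sub>R v \<in> ball x e" "y \<in> ball x e" using y e by (auto simp: dist_commute)
    then have "\<bar>F (y + t *\<^sub>R v) - F y\<bar> \<le> L * dist (y + t *\<^sub>R v) y" using L by blast
    also have "\<dots> \<le> \<bar>L\<bar> * (t * norm v)" using t by (simp add: dist_norm mult_right_mono)
    finally have "(F (y + t *\<^sub>R v) - F y) / t \<le> \<bar>L\<bar> * norm v" using t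
      by (simp add: divide_le_eq abs_le_iff algebra_simps)
    then show "(\<lambda>(y, t). ereal ((F (y + t *\<^sub>R v) - F y) / t)) (y, t) \<le> ereal (\<bar>L\<bar> * norm v)" by simp
  qed
  have "norm \<zeta> \<le> \<bar>L\<bar>" if "\<zeta> \<in> clarke_grad F x" for \<zeta>
  proof -
    have a: "ereal (\<zeta> \<bullet> \<zeta>) \<le> clarke_dir F x \<zeta>" using that unfolding clarke_grad_def by auto
    have "ereal (\<zeta> \<bullet> \<zeta>) \<le> ereal (\<bar>L\<bar> * norm \<zeta>)" using order_trans[OF a cd] .
    then have "norm \<zeta> * norm \<zeta> \<le> \<bar>L\<bar> * norm \<zeta>" by (simp add: power2_norm_eq_inner[symmetric] power2_eq_square)
    then show ?thesis by (cases "norm \<zeta> = 0") (auto simp: mult_le_cancel_right)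
  qed
  then show ?thesis by blast
qed

lemma loc_unif:
  fixes F :: "'a::euclidean_space \<Rightarrow> real"
  assumes sm: "smoothing_family F Fs dFs" and cF: "continuous_on UNIV F" and e: "e > 0"
  shows "\<exists>N. \<forall>z\<in>cball x 1. \<forall>\<rho>\<ge>N. \<bar>Fs \<rho> z - F z\<bar> < e"
proof (rule ccontr)
  assume "\<not> ?thesis"
  then have "\<forall>n::nat. \<exists>z\<in>cball x 1. \<exists>\<rho>\<ge>real n. \<bar>Fs \<rho> z - F z\<bar> \<ge> e" by (auto simp: not_less)
  then obtain z \<rho> where z: "\<And>n. z n \<in> cball x 1" and \<rho>: "\<And>n. \<rho> n \<ge> real n"
    and big: "\<And>n. \<bar>Fs (\<rho> n) (z n) - F (z n)\<bar> \<ge> e" by metis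
  obtain y r where y: "y \<in> cball x 1" and r: "strict_mono r" and zr: "(z \<circ> r) \<longlonglongrightarrow> y"
    using seq_compactE[OF compact_imp_seq_compact[OF compact_cball] ] z by metis
  have "filterlim (\<rho> \<circ> r) at_top sequentially"
  proof (subst filterlim_at_top, intro allI)
    fix Z :: real
    obtain n :: nat where "Z \<le> real n" using real_arch_simple by auto
    have "\<forall>m\<ge>n. Z \<le> (\<rho> \<circ> r) m"
    proof (intro allI impI)
      fix m assume "n \<le> m"
      then have "real n \<le> real (r m)" using seq_suble[OF r, of m] by linarith
      then show "Z \<le> (\<rho> \<circ> r) m" using \<rho>[of "r m"] \<open>Z \<le> real n\<close> by simp
    qed
    then show "eventually (\<lambda>m. Z \<le> (\<rho> \<circ> r) m) sequentially" unfolding eventually_sequentially by auto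
  qed
  from smooth_seq[OF sm zr this] have l1: "(\<lambda>k. Fs (\<rho> (r k)) (z (r k))) \<longlonglongrightarrow> F y" by simp
  have l2: "(\<lambda>k. F (z (r k))) \<longlonglongrightarrow> F y"
    using isCont_tendsto_compose[of y F "z \<circ> r" sequentially] cF zr
    by (simp add: continuous_on_eq_continuous_at o_def)
  have "(\<lambda>k. \<bar>Fs (\<rho> (r k)) (z (r k)) - F (z (r k))\<bar>) \<longlonglongrightarrow> \<bar>F y - F y\<bar>"
    by (intro tendsto_intros l1 l2)
  then have "eventually (\<lambda>k. \<bar>Fs (\<rho> (r k)) (z (r k)) - F (z (r k))\<bar> < e) sequentially"
    using e by (auto dest: order_tendstoD)
  then obtain k where "\<bar>Fs (\<rho> (r k)) (z (r k)) - F (z (r k))\<bar> < e" by (auto simp: eventually_sequentially)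
  with big show False by (meson not_less)
qed

lemma min_small_grad:
  fixes Fs :: "'a::euclidean_space \<Rightarrow> real"
  assumes der: "\<And>y. (Fs has_derivative (\<lambda>v. dF y \<bullet> v)) (at y)" and r: "r > 0" and C: "C \<ge> 0"
    and bd: "\<And>b. norm (b - x) = r \<Longrightarrow> Fs x < Fs b + C * r ^ 2"
  shows "\<exists>w. norm (w - x) < r \<and> norm (dF w) \<le> 2 * C * r"
proof -
  define g where "g w = Fs w + C * ((w - x) \<bullet> (w - x))" for w
  have gd: "(g has_derivative (\<lambda>h. dF w \<bullet> h + C * (h \<bullet> (w - x) + (w - x) \<bullet> h))) (at w)" for w
    unfolding g_def by (auto intro!: derivative_eq_intros der)
  have cg: "continuous_on (cball x r) g"
    by (rule has_derivative_continuous_on) (use gd has_derivative_at_withinI in blast)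
  obtain w where w: "w \<in> cball x r" and wmin: "\<And>y. y \<in> cball x r \<Longrightarrow> g w \<le> g y"
    using continuous_attains_inf[OF compact_cball _ cg] r by fastforce
  have gx: "g x = Fs x" by (simp add: g_def)
  have nw: "norm (w - x) < r"
  proof (rule ccontr)
    assume "\<not> norm (w - x) < r"
    then have "norm (w - x) = r" using w by (auto simp: dist_norm norm_minus_commute)
    then have "(w - x) \<bullet> (w - x) = r ^ 2" by (metis power2_norm_eq_inner)
    then have "g w = Fs w + C * r ^ 2" by (simp add: g_def)
    also have "\<dots> > Fs x" using bd \<open>norm (w - x) = r\<close> by auto
    finally have "g x < g w" using gx by simp
    moreover have "g w \<le> g x" using wmin r by auto
    ultimately show False by simp
  qed
  have ev: "eventually (\<lambda>y. g w \<le> g y) (at w)"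
  proof -
    have "open (ball x r)" "w \<in> ball x r" using nw by (auto simp: dist_norm norm_minus_commute)
    from eventually_at_in_open'[OF this] show ?thesis
      by eventually_elim (auto intro: wmin)
  qed
  from has_derivative_local_min[OF gd ev]
  have z: "(\<lambda>h. dF w \<bullet> h + C * (h \<bullet> (w - x) + (w - x) \<bullet> h)) = (\<lambda>h. 0)" .
  define h where "h = dF w + (2 * C) *\<^sub>R (w - x)"
  have "dF w \<bullet> h + C * (h \<bullet> (w - x) + (w - x) \<bullet> h) = 0" using fun_cong[OF z, of h] by simp
  then have "h \<bullet> h = 0" unfolding h_def by (simp add: inner_add_left inner_add_right inner_commute algebra_simps)
  then have "dF w = - (2 * C) *\<^sub>R (w - x)" unfolding h_def by (simp add: eq_neg_iff_add_eq_0)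
  then have "norm (dF w) = 2 * C * norm (w - x)" using C by simp
  also have "\<dots> \<le> 2 * C * r" using nw C by (simp add: mult_left_mono)
  finally show ?thesis using nw by blast
qed

lemma grad_bounded:
  fixes F :: "'a::euclidean_space \<Rightarrow> real"
  assumes sm: "smoothing_family F Fs dFs" and gc: "grad_consistent F dFs" and lip: "loc_lipschitz F"
    and zx: "z \<longlonglongrightarrow> x" and \<rho>: "filterlim \<rho> at_top sequentially" and pos: "\<forall>k. \<rho> k > 0"
  shows "bounded (range (\<lambda>k. dFs (\<rho> k) (z k)))"
proof (rule ccontr)
  assume nb: "\<not> ?thesis"
  obtain e0 L0 where e0: "e0 > 0" and L0: "\<forall>y\<in>ball x e0. \<forall>z\<in>ball x e0. \<bar>F y - F z\<bar> \<le> L0 * dist y z"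
    using lip unfolding loc_lipschitz_def by blast
  define L where "L = \<bar>L0\<bar>"
  have L0': "\<bar>F y - F z\<bar> \<le> L * dist y z" if "y \<in> ball x e0" "z \<in> ball x e0" for y z
  proof -
    have "\<bar>F y - F z\<bar> \<le> L0 * dist y z" using L0 that by blast
    also have "\<dots> \<le> L * dist y z" unfolding L_def by (simp add: mult_right_mono)
    finally show ?thesis .
  qed
  have L_nn: "L \<ge> 0" by (simp add: L_def)
  obtain L' where L': "\<forall>\<zeta>\<in>clarke_grad F x. norm \<zeta> \<le> L'" using clarke_bound[OF lip] by blast
  define R where "R = max L' (2 * L + 6) + 1"
  have RL': "R > L'" and RL: "R > 2 * L + 6" by (auto simp: R_def)
  define S where "S = {k. norm (dFs (\<rho> k) (z k)) > R}"
  have infS: "infinite S"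
  proof
    assume fS: "finite S"
    have "norm (dFs (\<rho> k) (z k)) \<le> R + (\<Sum>j\<in>S. norm (dFs (\<rho> j) (z j)))" for k
    proof (cases "k \<in> S")
      case True
      then have "norm (dFs (\<rho> k) (z k)) \<le> (\<Sum>j\<in>S. norm (dFs (\<rho> j) (z j)))"
        using fS by (intro member_le_sum) auto
      moreover have "R \<ge> 0" using RL L_nn by linarith
      ultimately show ?thesis by linarith
    next
      case False
      then have "norm (dFs (\<rho> k) (z k)) \<le> R" by (auto simp: S_def)
      moreover have "(\<Sum>j\<in>S. norm (dFs (\<rho> j) (z j))) \<ge> 0" by (intro sum_nonneg) auto
      ultimately show ?thesis by linarith
    qed
    then have "bounded (range (\<lambda>k. dFs (\<rho> k) (z k)))" unfolding bounded_iff by blast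
    with nb show False by simp
  qed
  have cF: "continuous_on UNIV F" using lip by (rule lip_cont)
  have der: "\<And>r y. r > 0 \<Longrightarrow> (Fs r has_derivative (\<lambda>v. dFs r y \<bullet> v)) (at y)"
    and cd: "\<And>r. r > 0 \<Longrightarrow> continuous_on UNIV (dFs r)"
    using sm unfolding smoothing_family_def by auto
  have claim: "\<exists>y \<rho>'. dist y x < 1 / (real n + 1) \<and> \<rho>' \<ge> real n \<and> \<rho>' > 0 \<and> norm (dFs \<rho>' y) = R" for n
  proof -
    define r where "r = min (1 / (real n + 1)) (min (e0 / 2) 1)"
    have r0: "r > 0" using e0 by (simp add: r_def)
    have r1: "r \<le> 1" "r \<le> 1 / (real n + 1)" "r < e0" using e0 by (auto simp: r_def)
    obtain N where N: "\<forall>b\<in>cball x 1. \<forall>\<rho>\<ge>N. \<bar>Fs \<rho> b - F b\<bar> < r ^ 2"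
      using loc_unif[OF sm cF, of "r ^ 2" x] r0 by auto
    have "eventually (\<lambda>k. \<rho> k \<ge> max N (real n)) sequentially"
      using \<rho> unfolding filterlim_at_top by blast
    moreover have "eventually (\<lambda>k. dist (z k) x < r) sequentially"
      using zx r0 by (rule tendstoD)
    ultimately have "eventually (\<lambda>k. \<rho> k \<ge> max N (real n) \<and> dist (z k) x < r) sequentially"
      by eventually_elim auto
    then obtain K0 where K0: "\<And>k. k \<ge> K0 \<Longrightarrow> \<rho> k \<ge> max N (real n) \<and> dist (z k) x < r"
      unfolding eventually_sequentially by auto
    obtain k where k: "k \<ge> K0" "k \<in> S" using infS unfolding infinite_nat_iff_unbounded_le by auto
    define \<rho>' where "\<rho>' = \<rho> k"
    have \<rho>'N: "\<rho>' \<ge> N" "\<rho>' \<ge> real n" "\<rho>' > 0" using K0[OF k(1)] pos by (auto simp: \<rho>'_def)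
    have zk: "dist (z k) x < r" using K0[OF k(1)] by auto
    define C where "C = L / r + 3"
    have C0: "C \<ge> 0" using L_nn r0 by (simp add: C_def)
    have bd: "Fs \<rho>' x < Fs \<rho>' b + C * r ^ 2" if b: "norm (b - x) = r" for b
    proof -
      have bx: "b \<in> cball x 1" "x \<in> cball x 1" using b r1 by (auto simp: dist_norm norm_minus_commute)
      have e1: "Fs \<rho>' x < F x + r ^ 2" using N bx(2) \<rho>'N by fastforce
      have e2: "Fs \<rho>' b > F b - r ^ 2" using N bx(1) \<rho>'N by fastforce
      have "b \<in> ball x e0" "x \<in> ball x e0" using b r1 e0 by (auto simp: dist_norm norm_minus_commute)
      then have "\<bar>F b - F x\<bar> \<le> L * dist b x" by (rule L0')
      then have e3: "F b \<ge> F x - L * r" using b by (simp add: dist_norm abs_le_iff)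
      have "C * r ^ 2 = L * r + 3 * r ^ 2" using r0 by (simp add: C_def power2_eq_square field_simps)
      then show ?thesis using e1 e2 e3 r0 by (smt (verit) zero_less_power)
    qed
    obtain w where w: "norm (w - x) < r" "norm (dFs \<rho>' w) \<le> 2 * C * r"
      using min_small_grad[of "Fs \<rho>'" "dFs \<rho>'" r C x, OF der[OF \<rho>'N(3)] r0 C0 bd] by blast
    have "2 * C * r = 2 * L + 6 * r" using r0 by (simp add: C_def field_simps)
    then have wR: "norm (dFs \<rho>' w) \<le> R" using w(2) r1 RL by linarith
    have zR: "norm (dFs \<rho>' (z k)) \<ge> R" using k(2) by (simp add: S_def \<rho>'_def)
    define f where "f t = norm (dFs \<rho>' (w + t *\<^sub>R (z k - w)))" for t
    have cf: "continuous_on {0..1} f" unfolding f_def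
      by (intro continuous_intros continuous_on_compose2[OF cd[OF \<rho>'N(3)]]) auto
    obtain t where t: "0 \<le> t" "t \<le> 1" "f t = R"
      using IVT'[of f 0 R 1] wR zR cf by (auto simp: f_def)
    define y where "y = w + t *\<^sub>R (z k - w)"
    have "y - x = (1 - t) *\<^sub>R (w - x) + t *\<^sub>R (z k - x)" by (simp add: y_def algebra_simps)
    then have "norm (y - x) \<le> (1 - t) * norm (w - x) + t * norm (z k - x)"
      using t by (metis abs_of_nonneg diff_ge_0_iff_ge norm_scaleR norm_triangle_ineq)
    also have "\<dots> \<le> (1 - t) * r + t * r"
      using t w(1) zk by (intro add_mono mult_left_mono) (auto simp: dist_norm)
    also have "\<dots> = r" by (simp add: algebra_simps)
    finally have "norm (y - x) \<le> r" .
    moreover have "norm (y - x) \<noteq> r \<or> True" by simp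
    have ylt: "dist y x < r"
    proof -
      have "norm (y - x) \<le> (1 - t) * norm (w - x) + t * norm (z k - x)"
        using \<open>y - x = _\<close> t by (metis abs_of_nonneg diff_ge_0_iff_ge norm_scaleR norm_triangle_ineq)
      also have "\<dots> < (1 - t) * r + t * r"
      proof (cases "t = 1")
        case True then show ?thesis using zk by (simp add: dist_norm)
      next
        case False
        then have "(1 - t) * norm (w - x) < (1 - t) * r" using t w(1) by (intro mult_strict_left_mono) auto
        moreover have "t * norm (z k - x) \<le> t * r" using t zk by (intro mult_left_mono) (auto simp: dist_norm)
        ultimately show ?thesis by linarith
      qed
      also have "\<dots> = r" by (simp add: algebra_simps)
      finally show ?thesis by (simp add: dist_norm)
    qed
    show ?thesis
      using ylt r1 \<rho>'N t(3) unfolding f_def y_def[symmetric] by (intro exI[of _ y] exI[of _ \<rho>']) auto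
  qed
  then obtain Y P where Y: "\<And>n. dist (Y n) x < 1 / (real n + 1)" and P: "\<And>n. P n \<ge> real n" "\<And>n. P n > 0"
    and YR: "\<And>n. norm (dFs (P n) (Y n)) = R" by metis
  have Yx: "Y \<longlonglongrightarrow> x"
  proof -
    have l: "(\<lambda>n. 1 / (real n + 1)) \<longlonglongrightarrow> (0::real)"
      using LIMSEQ_inverse_real_of_nat by (simp add: inverse_eq_divide add.commute)
    have ev: "eventually (\<lambda>n. norm (Y n - x) \<le> 1 / (real n + 1)) sequentially"
      using Y by (auto simp: dist_norm less_imp_le)
    have "(\<lambda>n. Y n - x) \<longlonglongrightarrow> 0" by (rule Lim_null_comparison[OF ev l])
    then show ?thesis by (simp add: Lim_null[symmetric])
  qed
  have Ptop: "filterlim P at_top sequentially"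
  proof (subst filterlim_at_top, intro allI)
    fix Z :: real
    obtain n :: nat where "Z \<le> real n" using real_arch_simple by auto
    have "\<forall>m\<ge>n. Z \<le> P m"
    proof (intro allI impI)
      fix m assume "n \<le> m"
      then have "real n \<le> real m" by simp
      then show "Z \<le> P m" using P(1)[of m] \<open>Z \<le> real n\<close> by linarith
    qed
    then show "eventually (\<lambda>m. Z \<le> P m) sequentially" unfolding eventually_sequentially by auto
  qed
  have "bounded (range (\<lambda>n. dFs (P n) (Y n)))" unfolding bounded_iff using YR by auto
  then obtain v s where s: "strict_mono s" and vs: "((\<lambda>n. dFs (P n) (Y n)) \<circ> s) \<longlonglongrightarrow> v"
    using bounded_imp_convergent_subsequence by blast
  have "v \<in> grad_limits dFs x"
    unfolding grad_limits_def
  proof (intro CollectI exI conjI allI)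
    show "(Y \<circ> s) \<longlonglongrightarrow> x" using LIMSEQ_subseq_LIMSEQ[OF Yx s] .
    show "0 < (P \<circ> s) k" for k using P(2) by simp
    show "filterlim (P \<circ> s) at_top sequentially"
      using filterlim_compose[OF Ptop filterlim_subseq[OF s]] by (simp add: o_def)
    show "(\<lambda>k. dFs ((P \<circ> s) k) ((Y \<circ> s) k)) \<longlonglongrightarrow> v" using vs by (simp add: o_def)
  qed
  then have "v \<in> clarke_grad F x" using gc unfolding grad_consistent_def by blast
  then have "norm v \<le> L'" using L' by blast
  moreover have "norm v = R"
  proof -
    have "(\<lambda>n. norm (((\<lambda>n. dFs (P n) (Y n)) \<circ> s) n)) \<longlonglongrightarrow> norm v" using vs by (rule tendsto_norm)
    moreover have "(\<lambda>n. norm (((\<lambda>n. dFs (P n) (Y n)) \<circ> s) n)) = (\<lambda>n. R)" using YR by (simp add: fun_eq_iff)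
    ultimately show ?thesis using LIMSEQ_unique tendsto_const by metis
  qed
  ultimately show False using RL' by simp
qed

lemma deriv_line:
  assumes "(F has_derivative (\<lambda>v. G \<bullet> v)) (at (X + s *\<^sub>R D))"
  shows "((\<lambda>t. F (X + t *\<^sub>R D)) has_real_derivative (G \<bullet> D)) (at s)"
proof -
  have l: "((\<lambda>t. X + t *\<^sub>R D) has_derivative (\<lambda>t. t *\<^sub>R D)) (at s)"
    by (auto intro!: derivative_eq_intros)
  have a: "(F has_derivative (\<lambda>v. G \<bullet> v)) (at ((\<lambda>t. X + t *\<^sub>R D) s))" using assms by simp
  have "((\<lambda>t. F (X + t *\<^sub>R D)) has_derivative (\<lambda>t. G \<bullet> (t *\<^sub>R D))) (at s)"
    using has_derivative_compose[OF l a] by simp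
  then show ?thesis by (simp add: has_field_derivative_def mult.commute[of _ "G \<bullet> D"])
qed

lemma unif_err:
  fixes F :: "'a::euclidean_space \<Rightarrow> real"
  assumes der: "\<And>y. (F has_derivative (\<lambda>v. dF y \<bullet> v)) (at y)" and cd: "continuous_on UNIV dF"
    and bX: "\<And>n. norm (X n) \<le> BX" and bD: "\<And>n. norm (D n) \<le> BD"
    and T: "\<And>n. 0 < T n \<and> T n \<le> 1" and T0: "T \<longlonglongrightarrow> 0" and e: "\<epsilon> > 0"
  shows "eventually (\<lambda>n. \<bar>F (X n + T n *\<^sub>R D n) - F (X n) - T n * (dF (X n) \<bullet> D n)\<bar> \<le> T n * \<epsilon>) sequentially"
proof -
  define K where "K = cball (0::'a) (BX + BD)"
  have BD0: "BD \<ge> 0" using bD[of 0] norm_ge_zero order_trans by blast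
  have "uniformly_continuous_on K dF"
    unfolding K_def by (rule compact_uniformly_continuous) (auto intro: continuous_on_subset[OF cd])
  then obtain \<delta> where \<delta>: "\<delta> > 0" and uc: "\<And>a b. a \<in> K \<Longrightarrow> b \<in> K \<Longrightarrow> dist b a < \<delta> \<Longrightarrow> dist (dF b) (dF a) < \<epsilon> / (BD + 1)"
    unfolding uniformly_continuous_on_def using e BD0
    by (metis add_nonneg_pos divide_pos_pos zero_less_one)
  have "eventually (\<lambda>n. T n < \<delta> / (BD + 1)) sequentially"
    using order_tendstoD(2)[OF T0, of "\<delta> / (BD + 1)"] \<delta> BD0 by simp
  then show ?thesis
  proof eventually_elim
    case (elim n)
    define x where "x = X n"
    define d where "d = D n"
    define t where "t = T n"
    have t: "0 < t" "t \<le> 1" "t < \<delta> / (BD + 1)" using T[of n] elim by (auto simp: t_def)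
    have "\<And>s. 0 \<le> s \<Longrightarrow> s \<le> t \<Longrightarrow> ((\<lambda>s. F (x + s *\<^sub>R d)) has_real_derivative (dF (x + s *\<^sub>R d) \<bullet> d)) (at s)"
      by (rule deriv_line[OF der])
    from MVT2[OF t(1) this] obtain z where z: "0 < z" "z < t"
      and mv: "F (x + t *\<^sub>R d) - F (x + 0 *\<^sub>R d) = (t - 0) * (dF (x + z *\<^sub>R d) \<bullet> d)" by blast
    have xK: "x \<in> K" using bX[of n] BD0 by (simp add: K_def x_def)
    have nd: "norm d \<le> BD" using bD by (simp add: d_def)
    have "norm (x + z *\<^sub>R d) \<le> norm x + z * norm d" using z by (metis abs_of_pos norm_scaleR norm_triangle_ineq)
    also have "\<dots> \<le> BX + 1 * BD" using bX[of n] nd z t by (intro add_mono mult_mono) (auto simp: x_def)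
    finally have zK: "x + z *\<^sub>R d \<in> K" by (simp add: K_def)
    have "dist (x + z *\<^sub>R d) x = z * norm d" using z by (simp add: dist_norm)
    also have "\<dots> \<le> t * BD" using z nd by (intro mult_mono) auto
    also have "\<dots> \<le> t * (BD + 1)" using t by simp
    also have "\<dots> < \<delta>" using t BD0 by (simp add: pos_less_divide_eq)
    finally have "dist (dF (x + z *\<^sub>R d)) (dF x) < \<epsilon> / (BD + 1)" using uc[OF xK zK] by simp
    then have "\<bar>dF (x + z *\<^sub>R d) \<bullet> d - dF x \<bullet> d\<bar> \<le> \<epsilon> / (BD + 1) * BD"
    proof -
      assume a: "dist (dF (x + z *\<^sub>R d)) (dF x) < \<epsilon> / (BD + 1)"
      have "\<bar>dF (x + z *\<^sub>R d) \<bullet> d - dF x \<bullet> d\<bar> = \<bar>(dF (x + z *\<^sub>R d) - dF x) \<bullet> d\<bar>" by (simp add: inner_diff_left)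
      also have "\<dots> \<le> norm (dF (x + z *\<^sub>R d) - dF x) * norm d" by (rule Cauchy_Schwarz_ineq2)
      also have "\<dots> \<le> \<epsilon> / (BD + 1) * BD" using a nd e BD0 by (intro mult_mono) (auto simp: dist_norm less_imp_le)
      finally show ?thesis .
    qed
    also have "\<dots> \<le> \<epsilon>" using e BD0 by (simp add: field_simps)
    finally have b: "\<bar>dF (x + z *\<^sub>R d) \<bullet> d - dF x \<bullet> d\<bar> \<le> \<epsilon>" .
    have "\<bar>F (x + t *\<^sub>R d) - F x - t * (dF x \<bullet> d)\<bar> = t * \<bar>dF (x + z *\<^sub>R d) \<bullet> d - dF x \<bullet> d\<bar>"
    proof -
      have "F (x + t *\<^sub>R d) - F x - t * (dF x \<bullet> d) = t * (dF (x + z *\<^sub>R d) \<bullet> d - dF x \<bullet> d)"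
        using mv by (simp add: algebra_simps)
      then show ?thesis using t by (simp add: abs_mult)
    qed
    also have "\<dots> \<le> t * \<epsilon>" using b t by (simp add: mult_left_mono)
    finally show ?case by (simp add: x_def d_def t_def)
  qed
qed

locale alg =
  fixes f :: "real ^ 'n \<Rightarrow> real"
    and g h :: "nat \<Rightarrow> real ^ 'n \<Rightarrow> real"
    and p q :: nat
    and fs :: "real \<Rightarrow> real ^ 'n \<Rightarrow> real" and dfs :: "real \<Rightarrow> real ^ 'n \<Rightarrow> real ^ 'n"
    and gs hs :: "real \<Rightarrow> nat \<Rightarrow> real ^ 'n \<Rightarrow> real"
    and dgs dhs :: "real \<Rightarrow> nat \<Rightarrow> real ^ 'n \<Rightarrow> real ^ 'n"
    and \<beta> \<sigma>1 \<sigma>2 \<sigma> \<sigma>' \<eta> :: real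
    and x d :: "nat \<Rightarrow> real ^ 'n"
    and \<rho> \<xi> r \<alpha> :: "nat \<Rightarrow> real"
    and W :: "nat \<Rightarrow> real ^ 'n ^ 'n"
    and lg lp lm :: "nat \<Rightarrow> nat \<Rightarrow> real" and lxi :: "nat \<Rightarrow> real"
  assumes pq: "p \<le> q"
    and lip_f: "loc_lipschitz f"
    and lip_g: "\<forall>i\<in>{1..p}. loc_lipschitz (g i)"
    and lip_h: "\<forall>j\<in>{p+1..q}. loc_lipschitz (h j)"
    and sm_f: "smoothing_family f fs dfs \<and> grad_consistent f dfs"
    and sm_g: "\<forall>i\<in>{1..p}. smoothing_family (g i) (\<lambda>s. gs s i) (\<lambda>s. dgs s i)
                            \<and> grad_consistent (g i) (\<lambda>s. dgs s i)"
    and sm_h: "\<forall>j\<in>{p+1..q}. smoothing_family (h j) (\<lambda>s. hs s j) (\<lambda>s. dhs s j)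
                            \<and> grad_consistent (h j) (\<lambda>s. dhs s j)"
    and params: "0 < \<beta> \<and> \<beta> < 1 \<and> 0 < \<sigma>1 \<and> \<sigma>1 \<le> \<sigma>2 \<and> \<sigma>2 < 1 \<and> 1 < \<sigma> \<and> 1 < \<sigma>' \<and> 1 < \<eta>"
    and init: "\<rho> 0 > 0 \<and> r 0 > 0"
    and W_spd: "\<forall>k. transpose (W k) = W k \<and> (\<forall>v. v \<noteq> 0 \<longrightarrow> v \<bullet> (W k *v v) > 0)"
    and qp_sol: "\<forall>k. qp_feasible p q gs dgs hs dhs (\<rho> k) (x k) (d k) (\<xi> k) \<and>
                   (\<forall>d' \<xi>'. qp_feasible p q gs dgs hs dhs (\<rho> k) (x k) d' \<xi>' \<longrightarrow>
                      qp_obj dfs (\<rho> k) (x k) (W k) (r k) (d k) (\<xi> k) \<le> qp_obj dfs (\<rho> k) (x k) (W k) (r k) d' \<xi>')"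
    and kkt_sign: "\<forall>k. (\<forall>i\<in>{1..p}. lg k i \<ge> 0) \<and> (\<forall>j\<in>{p+1..q}. lp k j \<ge> 0 \<and> lm k j \<ge> 0) \<and> lxi k \<ge> 0"
    and kkt_d: "\<forall>k. dfs (\<rho> k) (x k) + W k *v d k + (\<Sum>i\<in>{1..p}. lg k i *\<^sub>R dgs (\<rho> k) i (x k))
                    + (\<Sum>j\<in>{p+1..q}. (lp k j - lm k j) *\<^sub>R dhs (\<rho> k) j (x k)) = 0"
    and kkt_xi: "\<forall>k. r k = (\<Sum>i\<in>{1..p}. lg k i) + (\<Sum>j\<in>{p+1..q}. lp k j + lm k j) + lxi k"
    and kkt_compl: "\<forall>k. (\<forall>i\<in>{1..p}. lg k i * (gs (\<rho> k) i (x k) + dgs (\<rho> k) i (x k) \<bullet> d k - \<xi> k) = 0) \<and>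
                       (\<forall>j\<in>{p+1..q}. lp k j * (hs (\<rho> k) j (x k) + dhs (\<rho> k) j (x k) \<bullet> d k - \<xi> k) = 0 \<and>
                                      lm k j * (- hs (\<rho> k) j (x k) - dhs (\<rho> k) j (x k) \<bullet> d k - \<xi> k) = 0) \<and>
                       lxi k * \<xi> k = 0"
    and r_upd: "\<forall>k. r (Suc k) = (if \<xi> k = 0 then r k else \<sigma>' * r k)"
    and armijo: "\<forall>k. \<exists>l::nat. \<alpha> k = \<beta> ^ l \<and>
                   theta_s p q fs gs hs (\<rho> k) (r k) (x k + \<beta> ^ l *\<^sub>R d k) - theta_s p q fs gs hs (\<rho> k) (r k) (x k)
                      \<le> - \<sigma>1 * \<beta> ^ l * (d k \<bullet> (W k *v d k)) \<and>
                   (\<forall>l'<l. \<not> (theta_s p q fs gs hs (\<rho> k) (r k) (x k + \<beta> ^ l' *\<^sub>R d k) - theta_s p q fs gs hs (\<rho> k) (r k) (x k)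
                      \<le> - \<sigma>1 * \<beta> ^ l' * (d k \<bullet> (W k *v d k))))"
    and x_upd: "\<forall>k. x (Suc k) = x k + \<alpha> k *\<^sub>R d k"
    and rho_upd: "\<forall>k. \<rho> (Suc k) = (if norm (d k) \<le> \<eta> / \<rho> k then \<sigma> * \<rho> k else \<rho> k)"
begin

lemma rho_pos: "\<rho> k > 0"
  by (induction k) (use init params rho_upd in \<open>auto simp: mult_pos_pos\<close>)

lemma r_nonneg: "r k \<ge> 0"
  using kkt_xi kkt_sign by (auto intro!: add_nonneg_nonneg sum_nonneg)

lemma derivs:
  assumes "s > 0"
  shows "(fs s has_derivative (\<lambda>v. dfs s y \<bullet> v)) (at y)"
    "i \<in> {1..p} \<Longrightarrow> ((\<lambda>y. gs s i y) has_derivative (\<lambda>v. dgs s i y \<bullet> v)) (at y)"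
    "j \<in> {p+1..q} \<Longrightarrow> ((\<lambda>y. hs s j y) has_derivative (\<lambda>v. dhs s j y \<bullet> v)) (at y)"
    "continuous_on UNIV (dfs s)"
    "i \<in> {1..p} \<Longrightarrow> continuous_on UNIV (dgs s i)"
    "j \<in> {p+1..q} \<Longrightarrow> continuous_on UNIV (dhs s j)"
  using sm_f sm_g sm_h assms unfolding smoothing_family_def by auto

lemma part1:
  "\<exists>D. ((\<lambda>t. (theta_s p q fs gs hs (\<rho> k) (r k) (x k + t *\<^sub>R d k) - theta_s p q fs gs hs (\<rho> k) (r k) (x k)) / t) \<longlongrightarrow> D) (at_right 0)
           \<and> D \<le> - (d k \<bullet> (W k *v d k))"
proof (rule part1_k[OF pq])
  show "(fs (\<rho> k) has_derivative (\<lambda>v. dfs (\<rho> k) (x k) \<bullet> v)) (at (x k))" using derivs rho_pos by auto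
  show "\<forall>i\<in>{1..p}. ((\<lambda>y. gs (\<rho> k) i y) has_derivative (\<lambda>v. dgs (\<rho> k) i (x k) \<bullet> v)) (at (x k))"
    using derivs rho_pos by auto
  show "\<forall>j\<in>{p+1..q}. ((\<lambda>y. hs (\<rho> k) j y) has_derivative (\<lambda>v. dhs (\<rho> k) j (x k) \<bullet> v)) (at (x k))"
    using derivs(3) rho_pos by blast
qed (use qp_sol kkt_d kkt_sign kkt_compl kkt_xi in auto)

lemma part1b:
  assumes "d k \<noteq> 0"
  shows "\<exists>\<delta>>0. \<forall>t. 0 < t \<and> t < \<delta> \<longrightarrow>
                 theta_s p q fs gs hs (\<rho> k) (r k) (x k + t *\<^sub>R d k) < theta_s p q fs gs hs (\<rho> k) (r k) (x k)"
proof -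
  obtain D where D: "((\<lambda>t. (theta_s p q fs gs hs (\<rho> k) (r k) (x k + t *\<^sub>R d k) - theta_s p q fs gs hs (\<rho> k) (r k) (x k)) / t) \<longlongrightarrow> D) (at_right 0)"
    and Db: "D \<le> - (d k \<bullet> (W k *v d k))" using part1 by blast
  have "d k \<bullet> (W k *v d k) > 0" using W_spd assms by auto
  then have "D < 0" using Db by simp
  from order_tendstoD(2)[OF D this]
  have "eventually (\<lambda>t. (theta_s p q fs gs hs (\<rho> k) (r k) (x k + t *\<^sub>R d k) - theta_s p q fs gs hs (\<rho> k) (r k) (x k)) / t < 0) (at_right 0)" .
  then obtain b where b: "b > 0" and bb: "\<And>t. t > 0 \<Longrightarrow> t < b \<Longrightarrow>
     (theta_s p q fs gs hs (\<rho> k) (r k) (x k + t *\<^sub>R d k) - theta_s p q fs gs hs (\<rho> k) (r k) (x k)) / t < 0"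
    unfolding eventually_at_right_field by auto
  show ?thesis
  proof (intro exI[of _ b] conjI allI impI)
    fix t assume t: "0 < t \<and> t < b"
    from bb[of t] t show "theta_s p q fs gs hs (\<rho> k) (r k) (x k + t *\<^sub>R d k) < theta_s p q fs gs hs (\<rho> k) (r k) (x k)"
      by (simp add: divide_less_0_iff)
  qed (fact b)
qed

end

context alg begin

lemma r_pos: "r k > 0"
  by (induction k) (use init params r_upd in \<open>auto simp: mult_pos_pos\<close>)

lemma bounded_not_top:
  fixes u :: "nat \<Rightarrow> real"
  assumes "bounded (range u)" "filterlim u at_top sequentially" shows False
proof -
  obtain B where B: "\<And>k. norm (u k) \<le> B" using assms(1) unfolding bounded_iff by auto
  have "eventually (\<lambda>k. u k \<ge> B + 1) sequentially" using assms(2) unfolding filterlim_at_top by blast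
  then obtain k where "u k \<ge> B + 1" by (auto simp: eventually_sequentially)
  with B[of k] show False by simp
qed

lemma xi_ev:
  assumes br: "bounded (range r)"
  shows "\<exists>K. \<forall>k\<ge>K. \<xi> k = 0"
proof (rule ccontr)
  assume "\<not> ?thesis"
  then have inf: "infinite {k. \<xi> k \<noteq> 0}" unfolding infinite_nat_iff_unbounded_le by auto
  have "filterlim r at_top sequentially"
    by (rule grow_at_top[where P="\<lambda>k. \<xi> k \<noteq> 0" and c=\<sigma>', OF _ _ _ inf]) (use r_upd params init in auto)
  with br show False by (rule bounded_not_top)
qed

end

context alg begin

lemma Kinf:
  assumes A31: "\<exists>m M. 0 < m \<and> m < M \<and> (\<forall>j v. m * norm v ^ 2 \<le> v \<bullet> (W j *v v) \<and> v \<bullet> (W j *v v) \<le> M * norm v ^ 2)"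
    and bx: "bounded (range x)" and br: "bounded (range r)"
  shows "infinite {k. norm (d k) \<le> \<eta> / \<rho> k}"
proof
  assume fin: "finite {k. norm (d k) \<le> \<eta> / \<rho> k}"
  obtain mm where mm: "mm > 0" "\<And>j v. mm * norm v ^ 2 \<le> v \<bullet> (W j *v v)" using A31 by auto
  obtain K1 where K1: "\<forall>k\<ge>K1. \<xi> k = 0" using xi_ev[OF br] by auto
  obtain K2 where K2: "{k. norm (d k) \<le> \<eta> / \<rho> k} \<subseteq> {..<K2}" using finite_nat_bounded[OF fin] by auto
  define K where "K = max K1 K2"
  have Kp: "\<xi> k = 0 \<and> norm (d k) > \<eta> / \<rho> k" if "k \<ge> K" for k
  proof -
    have "\<not> norm (d k) \<le> \<eta> / \<rho> k" using K2 that by (auto simp: K_def)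
    then show ?thesis using K1 that by (auto simp: K_def)
  qed
  have rhoK: "\<rho> k = \<rho> K" if "k \<ge> K" for k
    using that
  proof (induct k rule: dec_induct)
    case (step n)
    then have "\<not> norm (d n) \<le> \<eta> / \<rho> n" using Kp[of n] by auto
    then show ?case using rho_upd step by simp
  qed simp
  have rK: "r k = r K" if "k \<ge> K" for k
    using that
  proof (induct k rule: dec_induct)
    case (step n)
    then have "\<xi> n = 0" using Kp[of n] by auto
    then show ?case using r_upd step by simp
  qed simp
  define \<rho>b where "\<rho>b = \<rho> K"
  define rb where "rb = r K"
  define \<Theta> where "\<Theta> y = theta_s p q fs gs hs \<rho>b rb y" for y
  have th: "theta_s p q fs gs hs (\<rho> k) (r k) = \<Theta>" if "k \<ge> K" for k
    using rhoK[OF that] rK[OF that] by (simp add: \<Theta>_def \<rho>b_def rb_def fun_eq_iff)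
  have \<rho>b0: "\<rho>b > 0" by (simp add: \<rho>b_def rho_pos)
  have rb0: "rb \<ge> 0" by (simp add: rb_def r_nonneg)
  define C where "C = closure (range x)"
  have cC: "compact C" unfolding C_def using bx by (simp add: compact_closure)
  have xC: "x k \<in> C" for k using closure_subset[of "range x"] by (auto simp: C_def)
  have cfs: "continuous_on UNIV (fs \<rho>b)"
    by (rule has_derivative_continuous_on, rule has_derivative_at_withinI, rule derivs(1)[OF \<rho>b0])
  obtain B where B: "\<And>y. y \<in> C \<Longrightarrow> \<bar>fs \<rho>b y\<bar> \<le> B"
    using compact_imp_bounded[OF compact_continuous_image[OF continuous_on_subset[OF cfs] cC]]
    unfolding bounded_iff by auto
  obtain G where G: "\<And>y. y \<in> C \<Longrightarrow> norm (dfs \<rho>b y) \<le> G"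
    using compact_imp_bounded[OF compact_continuous_image[OF continuous_on_subset[OF derivs(4)[OF \<rho>b0]] cC]]
    unfolding bounded_iff by auto
  have G0: "G \<ge> 0" using G[OF xC[of 0]] norm_ge_zero[of "dfs \<rho>b (x 0)"] by linarith
  have thf: "\<Theta> y \<ge> fs \<rho>b y" for y
    using rb0 phi_ge(3)[of p q gs hs \<rho>b y] by (simp add: \<Theta>_def theta_s_def)
  define c0 where "c0 = mm * (\<eta> / \<rho>b) ^ 2"
  have c00: "c0 > 0" using mm \<rho>b0 params by (simp add: c0_def)
  have dW: "d k \<bullet> (W k *v d k) \<ge> c0" if "k \<ge> K" for k
  proof -
    have "\<eta> / \<rho>b < norm (d k)" using Kp[OF that] rhoK[OF that] by (simp add: \<rho>b_def)
    moreover have "\<eta> / \<rho>b > 0" using \<rho>b0 params by simp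
    ultimately have "(\<eta> / \<rho>b) ^ 2 \<le> norm (d k) ^ 2" by (intro power_mono) auto
    then have "c0 \<le> mm * norm (d k) ^ 2" unfolding c0_def using mm by (intro mult_left_mono) auto
    then show ?thesis using mm(2)[of "d k" k] by linarith
  qed
  have al0: "\<alpha> k > 0" for k
  proof -
    obtain l where "\<alpha> k = \<beta> ^ l" using armijo by blast
    then show ?thesis using params by simp
  qed
  have desc: "\<Theta> (x (Suc k)) \<le> \<Theta> (x k) - \<sigma>1 * \<alpha> k * c0" if "k \<ge> K" for k
  proof -
    obtain l where l: "\<alpha> k = \<beta> ^ l" and arm: "theta_s p q fs gs hs (\<rho> k) (r k) (x k + \<beta> ^ l *\<^sub>R d k) - theta_s p q fs gs hs (\<rho> k) (r k) (x k)
                      \<le> - \<sigma>1 * \<beta> ^ l * (d k \<bullet> (W k *v d k))" using armijo by blast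
    have "\<sigma>1 * \<alpha> k * c0 \<le> \<sigma>1 * \<alpha> k * (d k \<bullet> (W k *v d k))"
      using dW[OF that] params al0[of k] by (intro mult_left_mono) auto
    then show ?thesis using arm l x_upd th[OF that] by auto
  qed
  have tele: "\<Theta> (x (K + n)) \<le> \<Theta> (x K) - \<sigma>1 * c0 * (\<Sum>i<n. \<alpha> (K + i))" for n
  proof (induction n)
    case 0 then show ?case by simp
  next
    case (Suc n)
    have "\<Theta> (x (K + Suc n)) \<le> \<Theta> (x (K + n)) - \<sigma>1 * \<alpha> (K + n) * c0"
      using desc[of "K + n"] by simp
    with Suc show ?case by (simp add: algebra_simps)
  qed
  have summ: "summable (\<lambda>i. \<alpha> (K + i))"
  proof (rule summableI_nonneg_bounded)
    show "0 \<le> \<alpha> (K + n)" for n using al0 less_imp_le by blast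
    fix n
    have "-B \<le> \<Theta> (x (K + n))" using B[OF xC[of "K+n"]] thf[of "x (K+n)"] by (auto simp: abs_le_iff)
    then have "\<sigma>1 * c0 * (\<Sum>i<n. \<alpha> (K + i)) \<le> \<Theta> (x K) + B" using tele[of n] by linarith
    then show "(\<Sum>i<n. \<alpha> (K + i)) \<le> (\<Theta> (x K) + B) / (\<sigma>1 * c0)"
      using params c00 by (simp add: pos_le_divide_eq mult.commute)
  qed
  have alim: "(\<lambda>n. \<alpha> (K + n)) \<longlonglongrightarrow> 0" using summable_LIMSEQ_zero[OF summ] .
  define C1 where "C1 = \<Theta> (x K) + B"
  have thK: "\<Theta> (x k) \<le> \<Theta> (x K)" if "k \<ge> K" for k
  proof -
    have "(\<Sum>i<k - K. \<alpha> (K + i)) \<ge> 0" using al0 by (intro sum_nonneg) (simp add: less_imp_le)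
    moreover have "\<sigma>1 * c0 \<ge> 0" using params c00 by simp
    ultimately have "\<sigma>1 * c0 * (\<Sum>i<k - K. \<alpha> (K + i)) \<ge> 0" by simp
    moreover have "x (K + (k - K)) = x k" using that by simp
    ultimately show ?thesis using tele[of "k - K"] by simp
  qed
  define BD where "BD = max 1 (2 * (C1 + G) / mm)"
  have dbd: "norm (d k) \<le> BD" if "k \<ge> K" for k
  proof -
    have feas0: "qp_feasible p q gs dgs hs dhs (\<rho> k) (x k) 0 (phi_s p q gs hs (\<rho> k) (x k))"
      unfolding qp_feasible_def using phi_ge(1)[of _ p gs "\<rho> k" "x k" q hs] phi_ge(2)[of _ p q hs "\<rho> k" "x k" gs]
        phi_ge(3)[of p q gs hs "\<rho> k" "x k"] by (auto simp: abs_le_iff)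
    have "qp_obj dfs (\<rho> k) (x k) (W k) (r k) (d k) (\<xi> k) \<le> qp_obj dfs (\<rho> k) (x k) (W k) (r k) 0 (phi_s p q gs hs (\<rho> k) (x k))"
      using qp_sol feas0 by blast
    then have q1: "dfs \<rho>b (x k) \<bullet> d k + 1/2 * (d k \<bullet> (W k *v d k)) \<le> rb * phi_s p q gs hs \<rho>b (x k)"
      using Kp[OF that] rhoK[OF that] rK[OF that] by (simp add: qp_obj_def \<rho>b_def rb_def)
    have "rb * phi_s p q gs hs \<rho>b (x k) = \<Theta> (x k) - fs \<rho>b (x k)" by (simp add: \<Theta>_def theta_s_def)
    also have "\<dots> \<le> C1" using thK[OF that] B[OF xC[of k]] by (simp add: C1_def abs_le_iff)
    finally have q2: "rb * phi_s p q gs hs \<rho>b (x k) \<le> C1" .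
    have "\<bar>dfs \<rho>b (x k) \<bullet> d k\<bar> \<le> G * norm (d k)"
      using order_trans[OF Cauchy_Schwarz_ineq2 mult_right_mono[OF G[OF xC[of k]] norm_ge_zero]] .
    then have q3: "mm * norm (d k) ^ 2 \<le> 2 * C1 + 2 * G * norm (d k)"
      using q1 q2 mm(2)[of "d k" k] by linarith
    show ?thesis
    proof (cases "norm (d k) \<le> 1")
      case True then show ?thesis by (simp add: BD_def)
    next
      case False
      have C10: "C1 \<ge> 0" using thK[of K] B[OF xC[of K]] thf[of "x K"] by (simp add: C1_def abs_le_iff)
      have "mm * norm (d k) ^ 2 \<le> (2 * C1 + 2 * G) * norm (d k)"
      proof -
        have "C1 * 1 \<le> C1 * norm (d k)" using C10 False by (intro mult_left_mono) auto
        moreover have "(2 * C1 + 2 * G) * norm (d k) = 2 * (C1 * norm (d k)) + 2 * G * norm (d k)" by (simp add: algebra_simps)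
        ultimately show ?thesis using q3 by linarith
      qed
      then have "(mm * norm (d k)) * norm (d k) \<le> (2 * C1 + 2 * G) * norm (d k)" by (simp add: power2_eq_square mult.assoc)
      then have "mm * norm (d k) \<le> 2 * C1 + 2 * G" using False by (auto simp: mult_le_cancel_right)
      then have "norm (d k) \<le> 2 * (C1 + G) / mm" using mm by (simp add: pos_le_divide_eq algebra_simps)
      then show ?thesis by (simp add: BD_def)
    qed
  qed
  obtain BX where BX: "\<And>k. norm (x k) \<le> BX" using bx unfolding bounded_iff by auto
  define T where "T n = min (\<alpha> (K + n) / \<beta>) 1" for n
  have T01: "0 < T n \<and> T n \<le> 1" for n
  proof -
    have "\<beta> > 0" using params by simp
    then show ?thesis using al0[of "K + n"] by (simp add: T_def)
  qed
  have Tlim: "T \<longlonglongrightarrow> 0"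
  proof -
    have "(\<lambda>n. min (\<alpha> (K + n) / \<beta>) 1) \<longlonglongrightarrow> min (0 / \<beta>) 1"
      using params by (intro tendsto_intros alim) auto
    moreover have "T = (\<lambda>n. min (\<alpha> (K + n) / \<beta>) 1)" by (simp add: fun_eq_iff T_def)
    ultimately show ?thesis by simp
  qed
  define \<epsilon> where "\<epsilon> = (1 - \<sigma>1) * c0 / (2 * (1 + rb))"
  have \<epsilon>0: "\<epsilon> > 0" using params c00 rb0 by (simp add: \<epsilon>_def)
  let ?X = "\<lambda>n. x (K + n)" and ?D = "\<lambda>n. d (K + n)"
  have bD: "norm (?D n) \<le> BD" for n using dbd by simp
  have E1: "eventually (\<lambda>n. \<bar>fs \<rho>b (?X n + T n *\<^sub>R ?D n) - fs \<rho>b (?X n) - T n * (dfs \<rho>b (?X n) \<bullet> ?D n)\<bar> \<le> T n * \<epsilon>) sequentially"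
    by (rule unif_err[OF derivs(1)[OF \<rho>b0] derivs(4)[OF \<rho>b0] BX bD T01 Tlim \<epsilon>0])
  have E2: "eventually (\<lambda>n. \<forall>i\<in>{1..p}. \<bar>gs \<rho>b i (?X n + T n *\<^sub>R ?D n) - gs \<rho>b i (?X n) - T n * (dgs \<rho>b i (?X n) \<bullet> ?D n)\<bar> \<le> T n * \<epsilon>) sequentially"
    by (rule eventually_ball_finite, simp, intro ballI unif_err[OF derivs(2)[OF \<rho>b0] derivs(5)[OF \<rho>b0] BX bD T01 Tlim \<epsilon>0])
  have E3: "eventually (\<lambda>n. \<forall>j\<in>{p+1..q}. \<bar>hs \<rho>b j (?X n + T n *\<^sub>R ?D n) - hs \<rho>b j (?X n) - T n * (dhs \<rho>b j (?X n) \<bullet> ?D n)\<bar> \<le> T n * \<epsilon>) sequentially"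
    by (rule eventually_ball_finite, simp, intro ballI unif_err[OF derivs(3)[OF \<rho>b0] derivs(6)[OF \<rho>b0] BX bD T01 Tlim \<epsilon>0])
  have E4: "eventually (\<lambda>n. \<alpha> (K + n) < 1) sequentially"
    using order_tendstoD(2)[OF alim, of 1] by simp
  from E1 E2 E3 E4 have "eventually (\<lambda>n. False) sequentially"
  proof eventually_elim
    case (elim n)
    define k where "k = K + n"
    have kK: "k \<ge> K" by (simp add: k_def)
    obtain l where l: "\<alpha> k = \<beta> ^ l" and fail: "\<And>l'. l' < l \<Longrightarrow> \<not> (theta_s p q fs gs hs (\<rho> k) (r k) (x k + \<beta> ^ l' *\<^sub>R d k) - theta_s p q fs gs hs (\<rho> k) (r k) (x k)
                      \<le> - \<sigma>1 * \<beta> ^ l' * (d k \<bullet> (W k *v d k)))" using armijo by blast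
    have l0: "l \<noteq> 0"
    proof
      assume "l = 0" then show False using l elim(4) by (simp add: k_def)
    qed
    define t where "t = T n"
    have tb: "t = \<beta> ^ (l - 1)"
    proof -
      have "\<alpha> k / \<beta> = \<beta> ^ (l - 1)" using l l0 params by (cases l) auto
      moreover have "\<beta> ^ (l - 1) \<le> 1" using params by (simp add: power_le_one)
      ultimately show ?thesis by (simp add: t_def T_def k_def)
    qed
    have t01: "0 < t" "t \<le> 1" using T01[of n] by (auto simp: t_def)
    have nf: "\<Theta> (x k + t *\<^sub>R d k) - \<Theta> (x k) > - \<sigma>1 * t * (d k \<bullet> (W k *v d k))"
      using fail[of "l - 1"] l0 th[OF kK] tb by auto
    have xi0: "\<xi> k = 0" using Kp[OF kK] by simp
    have feas: "qp_feasible p q gs dgs hs dhs \<rho>b (x k) (d k) 0"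
    proof -
      have "qp_feasible p q gs dgs hs dhs (\<rho> k) (x k) (d k) (\<xi> k)" using qp_sol by blast
      then show ?thesis using xi0 rhoK[OF kK] by (simp add: \<rho>b_def)
    qed
    define ph where "ph = phi_s p q gs hs \<rho>b (x k)"
    have ph0: "ph \<ge> 0" by (simp add: ph_def phi_ge)
    have fup: "fs \<rho>b (x k + t *\<^sub>R d k) \<le> fs \<rho>b (x k) + t * (dfs \<rho>b (x k) \<bullet> d k) + t * \<epsilon>"
      using elim(1) by (simp add: t_def k_def abs_le_iff)
    have phup: "phi_s p q gs hs \<rho>b (x k + t *\<^sub>R d k) \<le> (1 - t) * ph + t * \<epsilon>"
      unfolding phi_s_def
    proof (subst Max_le_iff, simp, simp, intro ballI)
      fix a assume "a \<in> {0} \<union> (\<lambda>i. gs \<rho>b i (x k + t *\<^sub>R d k)) ` {1..p} \<union> (\<lambda>j. \<bar>hs \<rho>b j (x k + t *\<^sub>R d k)\<bar>) ` {p + 1..q}"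
      then consider "a = 0"
        | i where "i \<in> {1..p}" "a = gs \<rho>b i (x k + t *\<^sub>R d k)"
        | j where "j \<in> {p+1..q}" "a = \<bar>hs \<rho>b j (x k + t *\<^sub>R d k)\<bar>" by auto
      then show "a \<le> (1 - t) * ph + t * \<epsilon>"
      proof cases
        case 1 then show ?thesis using t01 ph0 \<epsilon>0 by simp
      next
        case (2 i)
        have e: "gs \<rho>b i (x k + t *\<^sub>R d k) \<le> gs \<rho>b i (x k) + t * (dgs \<rho>b i (x k) \<bullet> d k) + t * \<epsilon>"
        proof -
          have "\<bar>gs \<rho>b i (x k + t *\<^sub>R d k) - gs \<rho>b i (x k) - t * (dgs \<rho>b i (x k) \<bullet> d k)\<bar> \<le> t * \<epsilon>"
            using elim(2) 2(1) unfolding t_def k_def by blast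
          then show ?thesis by (simp add: abs_le_iff)
        qed
        have c: "gs \<rho>b i (x k) + dgs \<rho>b i (x k) \<bullet> d k \<le> 0" using feas 2(1) by (auto simp: qp_feasible_def)
        have g: "gs \<rho>b i (x k) \<le> ph" using 2(1) by (simp add: ph_def phi_ge)
        have "gs \<rho>b i (x k) + t * (dgs \<rho>b i (x k) \<bullet> d k) = (1 - t) * gs \<rho>b i (x k) + t * (gs \<rho>b i (x k) + dgs \<rho>b i (x k) \<bullet> d k)"
          by (simp add: algebra_simps)
        also have "\<dots> \<le> (1 - t) * ph + t * 0"
          using t01 c g by (intro add_mono mult_left_mono mult_mono) auto
        finally show ?thesis using e 2(2) by simp
      next
        case (3 j)
        have e: "\<bar>hs \<rho>b j (x k + t *\<^sub>R d k) - hs \<rho>b j (x k) - t * (dhs \<rho>b j (x k) \<bullet> d k)\<bar> \<le> t * \<epsilon>"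
          using elim(3) 3(1) unfolding t_def k_def by blast
        have "hs \<rho>b j (x k) + dhs \<rho>b j (x k) \<bullet> d k \<le> 0 \<and> - hs \<rho>b j (x k) - dhs \<rho>b j (x k) \<bullet> d k \<le> 0"
          using feas 3(1) unfolding qp_feasible_def by blast
        then have c: "hs \<rho>b j (x k) + dhs \<rho>b j (x k) \<bullet> d k = 0" by linarith
        have g: "\<bar>hs \<rho>b j (x k)\<bar> \<le> ph" using 3(1) by (simp add: ph_def phi_ge)
        have "hs \<rho>b j (x k) + t * (dhs \<rho>b j (x k) \<bullet> d k) = (1 - t) * hs \<rho>b j (x k)"
        proof -
          have "dhs \<rho>b j (x k) \<bullet> d k = - hs \<rho>b j (x k)" using c by linarith
          then show ?thesis by (simp add: algebra_simps)
        qed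
        then have "\<bar>hs \<rho>b j (x k) + t * (dhs \<rho>b j (x k) \<bullet> d k)\<bar> \<le> (1 - t) * ph"
          using t01 g by (simp add: abs_mult mult_left_mono)
        then show ?thesis using e 3(2) by linarith
      qed
    qed
    have key: "dfs \<rho>b (x k) \<bullet> d k + rb * (0 - ph) \<le> - (d k \<bullet> (W k *v d k))"
    proof (rule key_ineq)
      show "dfs \<rho>b (x k) + W k *v d k + (\<Sum>i\<in>{1..p}. lg k i *\<^sub>R dgs \<rho>b i (x k)) + (\<Sum>j\<in>{p+1..q}. (lp k j - lm k j) *\<^sub>R dhs \<rho>b j (x k)) = 0"
        using kkt_d[rule_format, of k] rhoK[OF kK] by (simp add: \<rho>b_def)
      show "\<forall>i\<in>{1..p}. lg k i * (gs \<rho>b i (x k) + dgs \<rho>b i (x k) \<bullet> d k - 0) = 0"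
        using kkt_compl[rule_format, of k] rhoK[OF kK] xi0 by (simp add: \<rho>b_def)
      show "\<forall>j\<in>{p+1..q}. lp k j * (hs \<rho>b j (x k) + dhs \<rho>b j (x k) \<bullet> d k - 0) = 0 \<and> lm k j * (- hs \<rho>b j (x k) - dhs \<rho>b j (x k) \<bullet> d k - 0) = 0"
        using kkt_compl[rule_format, of k] rhoK[OF kK] xi0 by (simp add: \<rho>b_def)
      show "lxi k * 0 = 0" by simp
      show "rb = (\<Sum>i\<in>{1..p}. lg k i) + (\<Sum>j\<in>{p+1..q}. lp k j + lm k j) + lxi k"
        using kkt_xi[rule_format, of k] rK[OF kK] by (simp add: rb_def)
    qed (use kkt_sign phi_ge(1)[of _ p gs \<rho>b "x k" q hs] phi_ge(2)[of _ p q hs \<rho>b "x k" gs]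
        phi_ge(3)[of p q gs hs \<rho>b "x k"] ph_def in auto)
    have up: "\<Theta> (x k + t *\<^sub>R d k) - \<Theta> (x k) \<le> t * (dfs \<rho>b (x k) \<bullet> d k - rb * ph) + t * \<epsilon> * (1 + rb)"
    proof -
      have "\<Theta> (x k + t *\<^sub>R d k) - \<Theta> (x k) = (fs \<rho>b (x k + t *\<^sub>R d k) - fs \<rho>b (x k)) + rb * (phi_s p q gs hs \<rho>b (x k + t *\<^sub>R d k) - ph)"
        by (simp add: \<Theta>_def theta_s_def ph_def algebra_simps)
      also have "\<dots> \<le> (t * (dfs \<rho>b (x k) \<bullet> d k) + t * \<epsilon>) + rb * ((1 - t) * ph + t * \<epsilon> - ph)"
        using fup phup rb0 by (intro add_mono mult_left_mono) auto
      also have "\<dots> = t * (dfs \<rho>b (x k) \<bullet> d k - rb * ph) + t * \<epsilon> * (1 + rb)" by (simp add: algebra_simps)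
      finally show ?thesis .
    qed
    define w where "w = d k \<bullet> (W k *v d k)"
    have wc: "w \<ge> c0" using dW[OF kK] by (simp add: w_def)
    have "- \<sigma>1 * t * w < - t * w + t * \<epsilon> * (1 + rb)"
    proof -
      have "t * (dfs \<rho>b (x k) \<bullet> d k - rb * ph) \<le> t * (- w)"
        using key t01 by (intro mult_left_mono) (auto simp: w_def)
      then show ?thesis using nf up by (simp add: w_def)
    qed
    then have "t * ((1 - \<sigma>1) * w) < t * (\<epsilon> * (1 + rb))" by (simp add: algebra_simps)
    then have "(1 - \<sigma>1) * w < \<epsilon> * (1 + rb)" using t01 by simp
    also have "\<epsilon> * (1 + rb) = (1 - \<sigma>1) * c0 / 2"
    proof -
      have "1 + rb > 0" using rb0 by simp
      then show ?thesis by (simp add: \<epsilon>_def field_simps)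
    qed
    finally have "(1 - \<sigma>1) * w < (1 - \<sigma>1) * c0 / 2" .
    moreover have "(1 - \<sigma>1) * c0 \<le> (1 - \<sigma>1) * w" using wc params by (intro mult_left_mono) auto
    moreover have "(1 - \<sigma>1) * c0 > 0" using c00 params by simp
    ultimately show False by linarith
  qed
  then show False by simp
qed

end

lemma subseq_keep: "(X \<circ> a) \<longlonglongrightarrow> l \<Longrightarrow> strict_mono b \<Longrightarrow> (X \<circ> (a \<circ> b)) \<longlonglongrightarrow> l"
  using LIMSEQ_subseq_LIMSEQ by (fastforce simp: o_assoc)

lemma lim_eventually_zero:
  fixes X :: "nat \<Rightarrow> real"
  assumes "X \<longlonglongrightarrow> l" "eventually (\<lambda>k. X k = 0) sequentially" shows "l = 0"
proof -
  have "(\<lambda>k. 0::real) \<longlonglongrightarrow> 0" by simp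
  moreover have "eventually (\<lambda>k. (0::real) = X k) sequentially" using assms(2) by (auto elim: eventually_mono)
  ultimately have "X \<longlonglongrightarrow> 0" by (rule Lim_transform_eventually)
  with assms(1) show ?thesis using LIMSEQ_unique by blast
qed

context alg begin

definition Gr :: "nat \<Rightarrow> nat \<Rightarrow> real ^ 'n" where
  "Gr j k = (if j = 0 then dfs (\<rho> k) (x k) else if j \<le> p then dgs (\<rho> k) j (x k) else dhs (\<rho> k) j (x k))"

lemma stationary:
  assumes A31: "\<exists>m M. 0 < m \<and> m < M \<and> (\<forall>j v. m * norm v ^ 2 \<le> v \<bullet> (W j *v v) \<and> v \<bullet> (W j *v v) \<le> M * norm v ^ 2)"
    and bx: "bounded (range x)"
    and bl: "\<exists>B. \<forall>k. (\<forall>i\<in>{1..p}. \<bar>lg k i\<bar> \<le> B) \<and> (\<forall>j\<in>{p+1..q}. \<bar>lp k j\<bar> \<le> B \<and> \<bar>lm k j\<bar> \<le> B) \<and> \<bar>lxi k\<bar> \<le> B"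
    and br: "bounded (range r)"
    and s: "strict_mono s" and sK: "\<forall>k. s k \<in> {k. norm (d k) \<le> \<eta> / \<rho> k}" and xs: "(x \<circ> s) \<longlonglongrightarrow> xb"
  shows "clarke_stationary p q f g h xb"
proof -
  have rtop: "filterlim \<rho> at_top sequentially"
    by (rule grow_at_top[where P="\<lambda>k. norm (d k) \<le> \<eta> / \<rho> k" and c=\<sigma>, OF _ _ _ Kinf[OF A31 bx br]])
      (use rho_upd params init in auto)
  obtain mm MM where mm: "0 < mm" "\<And>j v. mm * norm v ^ 2 \<le> v \<bullet> (W j *v v)" "\<And>j v. v \<bullet> (W j *v v) \<le> MM * norm v ^ 2"
    using A31 by blast
  obtain Bl where Bl: "\<And>k i. i \<in> {1..p} \<Longrightarrow> \<bar>lg k i\<bar> \<le> Bl" "\<And>k j. j \<in> {p+1..q} \<Longrightarrow> \<bar>lp k j\<bar> \<le> Bl"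
     "\<And>k j. j \<in> {p+1..q} \<Longrightarrow> \<bar>lm k j\<bar> \<le> Bl" using bl by blast
  have Wb: "norm (W j *v v) \<le> MM * norm v" for j v
  proof (rule W_bound)
    show "transpose (W j) = W j" using W_spd by blast
    show "0 \<le> u \<bullet> (W j *v u)" for u using mm(2)[where j=j and v=u] mm(1) by (smt (verit) mult_nonneg_nonneg zero_le_power2)
  qed (rule mm(3))
  obtain K0 where K0: "\<And>k. k \<ge> K0 \<Longrightarrow> \<xi> k = 0" using xi_ev[OF br] by auto
  have rstop: "filterlim (\<rho> \<circ> s) at_top sequentially"
    using filterlim_compose[OF rtop filterlim_subseq[OF s]] by (simp add: o_def)
  have bG: "\<forall>j\<in>{0..q}. bounded (range (\<lambda>k. Gr j (s k)))"
  proof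
    fix j assume j: "j \<in> {0..q}"
    have pos: "\<forall>k. (\<rho> \<circ> s) k > 0" using rho_pos by simp
    show "bounded (range (\<lambda>k. Gr j (s k)))"
    proof (cases "j = 0")
      case True
      have "bounded (range (\<lambda>k. dfs ((\<rho> \<circ> s) k) ((x \<circ> s) k)))"
        by (rule grad_bounded[OF conjunct1[OF sm_f] conjunct2[OF sm_f] lip_f xs rstop pos])
      then show ?thesis using True by (simp add: Gr_def o_def)
    next
      case F: False
      show ?thesis
      proof (cases "j \<le> p")
        case True
        then have jj: "j \<in> {1..p}" using F by auto
        have "bounded (range (\<lambda>k. dgs ((\<rho> \<circ> s) k) j ((x \<circ> s) k)))"
          using sm_g lip_g jj by (intro grad_bounded[of "g j" "\<lambda>s. gs s j" "\<lambda>s. dgs s j", OF _ _ _ xs rstop pos]) auto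
        then show ?thesis using F True by (simp add: Gr_def o_def)
      next
        case False
        then have jj: "j \<in> {p+1..q}" using j by auto
        have "bounded (range (\<lambda>k. dhs ((\<rho> \<circ> s) k) j ((x \<circ> s) k)))"
          using sm_h lip_h jj by (intro grad_bounded[of "h j" "\<lambda>s. hs s j" "\<lambda>s. dhs s j", OF _ _ _ xs rstop pos]) auto
        then show ?thesis using F False by (simp add: Gr_def o_def)
      qed
    qed
  qed
  obtain s1 where s1: "strict_mono s1" "\<forall>j\<in>{0..q}. \<exists>l. ((\<lambda>k. Gr j (s k)) \<circ> s1) \<longlonglongrightarrow> l"
    using fin_subseq[OF _ bG] by auto
  have b1: "\<forall>i\<in>{1..p}. bounded (range (\<lambda>k. lg (s (s1 k)) i))"
  proof
    fix i assume i: "i \<in> {1..p}"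
    show "bounded (range (\<lambda>k. lg (s (s1 k)) i))" unfolding bounded_iff
      using Bl(1)[where i=i, OF i] by (auto simp: real_norm_def)
  qed
  obtain s2 where s2: "strict_mono s2" "\<forall>i\<in>{1..p}. \<exists>l. ((\<lambda>k. lg (s (s1 k)) i) \<circ> s2) \<longlonglongrightarrow> l"
    using fin_subseq[OF _ b1] by auto
  have b2: "\<forall>j\<in>{p+1..q}. bounded (range (\<lambda>k. lp (s (s1 (s2 k))) j))"
  proof
    fix j assume j: "j \<in> {p+1..q}"
    show "bounded (range (\<lambda>k. lp (s (s1 (s2 k))) j))" unfolding bounded_iff
      using Bl(2)[where j=j, OF j] by (auto simp: real_norm_def)
  qed
  obtain s3 where s3: "strict_mono s3" "\<forall>j\<in>{p+1..q}. \<exists>l. ((\<lambda>k. lp (s (s1 (s2 k))) j) \<circ> s3) \<longlonglongrightarrow> l"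
    using fin_subseq[OF _ b2] by auto
  have b3: "\<forall>j\<in>{p+1..q}. bounded (range (\<lambda>k. lm (s (s1 (s2 (s3 k)))) j))"
  proof
    fix j assume j: "j \<in> {p+1..q}"
    show "bounded (range (\<lambda>k. lm (s (s1 (s2 (s3 k)))) j))" unfolding bounded_iff
      using Bl(3)[where j=j, OF j] by (auto simp: real_norm_def)
  qed
  obtain s4 where s4: "strict_mono s4" "\<forall>j\<in>{p+1..q}. \<exists>l. ((\<lambda>k. lm (s (s1 (s2 (s3 k)))) j) \<circ> s4) \<longlonglongrightarrow> l"
    using fin_subseq[OF _ b3] by auto
  define S where "S k = s (s1 (s2 (s3 (s4 k))))" for k
  have S: "strict_mono S" unfolding S_def using s s1(1) s2(1) s3(1) s4(1)
    by (simp add: strict_mono_def)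
  have t234: "strict_mono (s2 \<circ> s3 \<circ> s4)" using s2(1) s3(1) s4(1) by (simp add: strict_mono_def)
  have t34: "strict_mono (s3 \<circ> s4)" using s3(1) s4(1) by (simp add: strict_mono_def)
  obtain \<zeta> where \<zeta>: "\<forall>j\<in>{0..q}. (\<lambda>k. Gr j (S k)) \<longlonglongrightarrow> \<zeta> j"
  proof -
    have "\<forall>j\<in>{0..q}. \<exists>l. (\<lambda>k. Gr j (S k)) \<longlonglongrightarrow> l"
    proof
      fix j assume "j \<in> {0..q}"
      then obtain l where "((\<lambda>k. Gr j (s k)) \<circ> s1) \<longlonglongrightarrow> l" using s1(2) by blast
      from subseq_keep[OF this t234] show "\<exists>l. (\<lambda>k. Gr j (S k)) \<longlonglongrightarrow> l" by (auto simp: S_def o_def)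
    qed
    then show ?thesis using that bchoice by metis
  qed
  obtain Lg where Lg: "\<forall>i\<in>{1..p}. (\<lambda>k. lg (S k) i) \<longlonglongrightarrow> Lg i"
  proof -
    have "\<forall>i\<in>{1..p}. \<exists>l. (\<lambda>k. lg (S k) i) \<longlonglongrightarrow> l"
    proof
      fix i assume "i \<in> {1..p}"
      then obtain l where "((\<lambda>k. lg (s (s1 k)) i) \<circ> s2) \<longlonglongrightarrow> l" using s2(2) by blast
      from subseq_keep[OF this t34] show "\<exists>l. (\<lambda>k. lg (S k) i) \<longlonglongrightarrow> l" by (auto simp: S_def o_def)
    qed
    then show ?thesis using that bchoice by metis
  qed
  obtain Lp where Lp: "\<forall>j\<in>{p+1..q}. (\<lambda>k. lp (S k) j) \<longlonglongrightarrow> Lp j"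
  proof -
    have "\<forall>j\<in>{p+1..q}. \<exists>l. (\<lambda>k. lp (S k) j) \<longlonglongrightarrow> l"
    proof
      fix j assume "j \<in> {p+1..q}"
      then obtain l where "((\<lambda>k. lp (s (s1 (s2 k))) j) \<circ> s3) \<longlonglongrightarrow> l" using s3(2) by blast
      from subseq_keep[OF this s4(1)] show "\<exists>l. (\<lambda>k. lp (S k) j) \<longlonglongrightarrow> l" by (auto simp: S_def o_def)
    qed
    then show ?thesis using that bchoice by metis
  qed
  obtain Lm where Lm: "\<forall>j\<in>{p+1..q}. (\<lambda>k. lm (S k) j) \<longlonglongrightarrow> Lm j"
  proof -
    have "\<forall>j\<in>{p+1..q}. \<exists>l. (\<lambda>k. lm (S k) j) \<longlonglongrightarrow> l"
      using s4(2) by (auto simp: S_def o_def)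
    then show ?thesis using that bchoice by metis
  qed
  have \<zeta>G: "(\<lambda>k. Gr j (S k)) \<longlonglongrightarrow> \<zeta> j" if "j \<in> {0..q}" for j using \<zeta> that by blast
  have \<zeta>f: "(\<lambda>k. dfs (\<rho> (S k)) (x (S k))) \<longlonglongrightarrow> \<zeta> 0" using \<zeta>G[of 0] by (simp add: Gr_def)
  have \<zeta>g: "(\<lambda>k. dgs (\<rho> (S k)) i (x (S k))) \<longlonglongrightarrow> \<zeta> i" if i: "i \<in> {1..p}" for i
    using \<zeta>G[of i] i pq by (simp add: Gr_def)
  have \<zeta>h: "(\<lambda>k. dhs (\<rho> (S k)) j (x (S k))) \<longlonglongrightarrow> \<zeta> j" if j: "j \<in> {p+1..q}" for j
    using \<zeta>G[of j] j by (simp add: Gr_def)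
  define t where "t k = s1 (s2 (s3 (s4 k)))" for k
  have t: "strict_mono t" unfolding t_def using s1(1) s2(1) s3(1) s4(1) by (simp add: strict_mono_def)
  have St: "S k = s (t k)" for k by (simp add: S_def t_def)
  have zx: "(\<lambda>k. x (S k)) \<longlonglongrightarrow> xb" using LIMSEQ_subseq_LIMSEQ[OF xs t] by (simp add: o_def St)
  have Stop: "filterlim (\<lambda>k. \<rho> (S k)) at_top sequentially"
    using filterlim_compose[OF rtop filterlim_subseq[OF S]] by simp
  have Spos: "\<forall>k. \<rho> (S k) > 0" using rho_pos by simp
  have d0: "(\<lambda>k. d (S k)) \<longlonglongrightarrow> 0"
  proof (rule Lim_null_comparison)
    show "eventually (\<lambda>k. norm (d (S k)) \<le> \<eta> / \<rho> (S k)) sequentially"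
      using sK by (simp add: St)
    show "(\<lambda>k. \<eta> / \<rho> (S k)) \<longlonglongrightarrow> 0"
      by (rule tendsto_divide_0[OF tendsto_const filterlim_at_top_imp_at_infinity[OF Stop]])
  qed
  have Wd0: "(\<lambda>k. W (S k) *v d (S k)) \<longlonglongrightarrow> 0"
  proof (rule Lim_null_comparison)
    show "eventually (\<lambda>k. norm (W (S k) *v d (S k)) \<le> MM * norm (d (S k))) sequentially"
      using Wb by simp
    show "(\<lambda>k. MM * norm (d (S k))) \<longlonglongrightarrow> 0" using tendsto_mult_right_zero[OF tendsto_norm_zero[OF d0]] by simp
  qed
  have xi0: "eventually (\<lambda>k. \<xi> (S k) = 0) sequentially"
  proof -
    have "S k \<ge> k" for k using seq_suble[OF S] .
    then show ?thesis unfolding eventually_sequentially using K0 by (meson le_trans)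
  qed
  have \<zeta>cl: "\<zeta> 0 \<in> clarke_grad f xb" "\<And>i. i \<in> {1..p} \<Longrightarrow> \<zeta> i \<in> clarke_grad (g i) xb"
    "\<And>j. j \<in> {p+1..q} \<Longrightarrow> \<zeta> j \<in> clarke_grad (h j) xb"
  proof -
    have gl: "v \<in> grad_limits dF xb" if "(\<lambda>k. dF (\<rho> (S k)) (x (S k))) \<longlonglongrightarrow> v" for dF v
      unfolding grad_limits_def using zx Spos Stop that by (intro CollectI exI[of _ "\<lambda>k. x (S k)"] exI[of _ "\<lambda>k. \<rho> (S k)"]) auto
    have "(\<lambda>k. dfs (\<rho> (S k)) (x (S k))) \<longlonglongrightarrow> \<zeta> 0" by (rule \<zeta>f)
    then show "\<zeta> 0 \<in> clarke_grad f xb" using gl sm_f unfolding grad_consistent_def by blast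
    fix i assume i: "i \<in> {1..p}"
    then have "(\<lambda>k. dgs (\<rho> (S k)) i (x (S k))) \<longlonglongrightarrow> \<zeta> i" by (rule \<zeta>g)
    then show "\<zeta> i \<in> clarke_grad (g i) xb" using gl[of "\<lambda>s. dgs s i"] sm_g i unfolding grad_consistent_def by blast
  next
    fix j assume j: "j \<in> {p+1..q}"
    have gl: "v \<in> grad_limits dF xb" if "(\<lambda>k. dF (\<rho> (S k)) (x (S k))) \<longlonglongrightarrow> v" for dF v
      unfolding grad_limits_def using zx Spos Stop that by (intro CollectI exI[of _ "\<lambda>k. x (S k)"] exI[of _ "\<lambda>k. \<rho> (S k)"]) auto
    from j have "(\<lambda>k. dhs (\<rho> (S k)) j (x (S k))) \<longlonglongrightarrow> \<zeta> j" by (rule \<zeta>h)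
    then show "\<zeta> j \<in> clarke_grad (h j) xb" using gl[of "\<lambda>s. dhs s j"] sm_h j unfolding grad_consistent_def by blast
  qed
  have glim: "(\<lambda>k. gs (\<rho> (S k)) i (x (S k)) + dgs (\<rho> (S k)) i (x (S k)) \<bullet> d (S k)) \<longlonglongrightarrow> g i xb" if i: "i \<in> {1..p}" for i
  proof -
    have a: "(\<lambda>k. gs (\<rho> (S k)) i (x (S k))) \<longlonglongrightarrow> g i xb"
      using smooth_seq[of "g i" "\<lambda>s. gs s i" "\<lambda>s. dgs s i", OF _ zx Stop] sm_g i by auto
    have "(\<lambda>k. dgs (\<rho> (S k)) i (x (S k))) \<longlonglongrightarrow> \<zeta> i" using \<zeta>g i .
    from tendsto_inner[OF this d0] have "(\<lambda>k. dgs (\<rho> (S k)) i (x (S k)) \<bullet> d (S k)) \<longlonglongrightarrow> 0" by simp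
    from tendsto_add[OF a this] show ?thesis by simp
  qed
  have hlim: "(\<lambda>k. hs (\<rho> (S k)) j (x (S k)) + dhs (\<rho> (S k)) j (x (S k)) \<bullet> d (S k)) \<longlonglongrightarrow> h j xb" if j: "j \<in> {p+1..q}" for j
  proof -
    have a: "(\<lambda>k. hs (\<rho> (S k)) j (x (S k))) \<longlonglongrightarrow> h j xb"
      using smooth_seq[of "h j" "\<lambda>s. hs s j" "\<lambda>s. dhs s j", OF _ zx Stop] sm_h j by auto
    have "(\<lambda>k. dhs (\<rho> (S k)) j (x (S k))) \<longlonglongrightarrow> \<zeta> j" using \<zeta>h j .
    from tendsto_inner[OF this d0] have "(\<lambda>k. dhs (\<rho> (S k)) j (x (S k)) \<bullet> d (S k)) \<longlonglongrightarrow> 0" by simp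
    from tendsto_add[OF a this] show ?thesis by simp
  qed
  have feasg: "g i xb \<le> 0" if i: "i \<in> {1..p}" for i
  proof (rule LIMSEQ_le_const2[OF glim[OF i]])
    from xi0 obtain N where "\<And>k. k \<ge> N \<Longrightarrow> \<xi> (S k) = 0" by (auto simp: eventually_sequentially)
    then show "\<exists>N. \<forall>k\<ge>N. gs (\<rho> (S k)) i (x (S k)) + dgs (\<rho> (S k)) i (x (S k)) \<bullet> d (S k) \<le> 0"
      using qp_sol i unfolding qp_feasible_def by (metis)
  qed
  have feash: "h j xb = 0" if j: "j \<in> {p+1..q}" for j
  proof -
    from xi0 obtain N where N: "\<And>k. k \<ge> N \<Longrightarrow> \<xi> (S k) = 0" by (auto simp: eventually_sequentially)
    have c: "hs (\<rho> (S k)) j (x (S k)) + dhs (\<rho> (S k)) j (x (S k)) \<bullet> d (S k) \<le> \<xi> (S k) \<and>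
        - hs (\<rho> (S k)) j (x (S k)) - dhs (\<rho> (S k)) j (x (S k)) \<bullet> d (S k) \<le> \<xi> (S k)" for k
      using qp_sol j unfolding qp_feasible_def by blast
    have u: "\<forall>k\<ge>N. hs (\<rho> (S k)) j (x (S k)) + dhs (\<rho> (S k)) j (x (S k)) \<bullet> d (S k) \<le> 0"
      using N c by (metis)
    have l: "\<forall>k\<ge>N. 0 \<le> hs (\<rho> (S k)) j (x (S k)) + dhs (\<rho> (S k)) j (x (S k)) \<bullet> d (S k)"
    proof (intro allI impI)
      fix k assume "N \<le> k"
      then have "\<xi> (S k) = 0" by (rule N)
      then show "0 \<le> hs (\<rho> (S k)) j (x (S k)) + dhs (\<rho> (S k)) j (x (S k)) \<bullet> d (S k)" using c[of k] by linarith
    qed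
    have "h j xb \<le> 0"
      by (rule LIMSEQ_le_const2[OF hlim[OF j]]) (use u in blast)
    moreover have "0 \<le> h j xb"
      by (rule LIMSEQ_le_const[OF hlim[OF j]]) (use l in blast)
    ultimately show ?thesis by simp
  qed
  have Lg0: "Lg i = 0" if i: "i \<in> {1..p}" and neg: "g i xb < 0" for i
  proof (rule lim_eventually_zero)
    show "(\<lambda>k. lg (S k) i) \<longlonglongrightarrow> Lg i" using Lg i by blast
    have "eventually (\<lambda>k. gs (\<rho> (S k)) i (x (S k)) + dgs (\<rho> (S k)) i (x (S k)) \<bullet> d (S k) < 0) sequentially"
      using order_tendstoD(2)[OF glim[OF i] neg] .
    then show "eventually (\<lambda>k. lg (S k) i = 0) sequentially"
      using xi0
    proof eventually_elim
      case (elim k)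
      have "lg (S k) i * (gs (\<rho> (S k)) i (x (S k)) + dgs (\<rho> (S k)) i (x (S k)) \<bullet> d (S k) - \<xi> (S k)) = 0"
        using kkt_compl i by blast
      then show ?case using elim by simp
    qed
  qed
  have Lgnn: "Lg i \<ge> 0" if i: "i \<in> {1..p}" for i
    by (rule LIMSEQ_le_const[of "\<lambda>k. lg (S k) i"]) (use Lg i kkt_sign in auto)
  have kktS: "Gr 0 (S k) + W (S k) *v d (S k) + (\<Sum>i\<in>{1..p}. lg (S k) i *\<^sub>R Gr i (S k))
      + (\<Sum>j\<in>{p+1..q}. (lp (S k) j - lm (S k) j) *\<^sub>R Gr j (S k)) = 0" for k
  proof -
    have "(\<Sum>i\<in>{1..p}. lg (S k) i *\<^sub>R Gr i (S k)) = (\<Sum>i\<in>{1..p}. lg (S k) i *\<^sub>R dgs (\<rho> (S k)) i (x (S k)))"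
      by (rule sum.cong) (auto simp: Gr_def)
    moreover have "(\<Sum>j\<in>{p+1..q}. (lp (S k) j - lm (S k) j) *\<^sub>R Gr j (S k)) = (\<Sum>j\<in>{p+1..q}. (lp (S k) j - lm (S k) j) *\<^sub>R dhs (\<rho> (S k)) j (x (S k)))"
      by (rule sum.cong) (auto simp: Gr_def)
    ultimately show ?thesis using kkt_d[rule_format, of "S k"] by (simp add: Gr_def)
  qed
  have "(\<lambda>k. Gr 0 (S k) + W (S k) *v d (S k) + (\<Sum>i\<in>{1..p}. lg (S k) i *\<^sub>R Gr i (S k))
      + (\<Sum>j\<in>{p+1..q}. (lp (S k) j - lm (S k) j) *\<^sub>R Gr j (S k)))
      \<longlonglongrightarrow> \<zeta> 0 + 0 + (\<Sum>i\<in>{1..p}. Lg i *\<^sub>R \<zeta> i) + (\<Sum>j\<in>{p+1..q}. (Lp j - Lm j) *\<^sub>R \<zeta> j)"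
  proof (intro tendsto_add tendsto_sum tendsto_scaleR tendsto_diff Wd0)
    show "(\<lambda>k. Gr 0 (S k)) \<longlonglongrightarrow> \<zeta> 0" using \<zeta>G by auto
    show "(\<lambda>k. lg (S k) i) \<longlonglongrightarrow> Lg i" if "i \<in> {1..p}" for i using Lg that by blast
    show "(\<lambda>k. Gr i (S k)) \<longlonglongrightarrow> \<zeta> i" if "i \<in> {1..p}" for i using \<zeta>G that pq by auto
    show "(\<lambda>k. lp (S k) j) \<longlonglongrightarrow> Lp j" if "j \<in> {p+1..q}" for j using Lp that by blast
    show "(\<lambda>k. lm (S k) j) \<longlonglongrightarrow> Lm j" if "j \<in> {p+1..q}" for j using Lm that by blast
    show "(\<lambda>k. Gr j (S k)) \<longlonglongrightarrow> \<zeta> j" if "j \<in> {p+1..q}" for j using \<zeta>G that by auto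
  qed
  then have lim0: "\<zeta> 0 + (\<Sum>i\<in>{1..p}. Lg i *\<^sub>R \<zeta> i) + (\<Sum>j\<in>{p+1..q}. (Lp j - Lm j) *\<^sub>R \<zeta> j) = 0"
    unfolding kktS by (simp add: LIMSEQ_const_iff)
  have act: "active_set p g xb \<subseteq> {1..p}" by (auto simp: active_set_def)
  have sumact: "(\<Sum>i\<in>active_set p g xb. Lg i *\<^sub>R \<zeta> i) = (\<Sum>i\<in>{1..p}. Lg i *\<^sub>R \<zeta> i)"
  proof (rule sum.mono_neutral_left[OF _ act])
    show "\<forall>i\<in>{1..p} - active_set p g xb. Lg i *\<^sub>R \<zeta> i = 0"
    proof
      fix i assume "i \<in> {1..p} - active_set p g xb"
      then have i: "i \<in> {1..p}" and "g i xb \<noteq> 0" by (auto simp: active_set_def)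
      then have "g i xb < 0" using feasg[OF i] by simp
      then show "Lg i *\<^sub>R \<zeta> i = 0" using Lg0[OF i] by simp
    qed
  qed simp
  show ?thesis
    unfolding clarke_stationary_def
  proof (intro conjI exI)
    show "feasible_P p q g h xb" unfolding feasible_P_def using feasg feash by auto
    show "\<zeta> 0 \<in> clarke_grad f xb" by (fact \<zeta>cl(1))
    show "\<forall>i\<in>active_set p g xb. Lg i \<ge> 0 \<and> \<zeta> i \<in> clarke_grad (g i) xb"
      using act Lgnn \<zeta>cl(2) by blast
    show "\<forall>j\<in>{p+1..q}. \<zeta> j \<in> clarke_grad (h j) xb" using \<zeta>cl(3) by blast
    show "\<zeta> 0 + (\<Sum>i\<in>active_set p g xb. Lg i *\<^sub>R \<zeta> i) + (\<Sum>j\<in>{p+1..q}. (Lp j - Lm j) *\<^sub>R \<zeta> j) = 0"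
      using lim0 sumact by simp
  qed
qed

end

theorem theorem3p1:
  fixes f :: "real ^ 'n \<Rightarrow> real"
    and g h :: "nat \<Rightarrow> real ^ 'n \<Rightarrow> real"
    and p q :: nat
    and fs :: "real \<Rightarrow> real ^ 'n \<Rightarrow> real" and dfs :: "real \<Rightarrow> real ^ 'n \<Rightarrow> real ^ 'n"
    and gs hs :: "real \<Rightarrow> nat \<Rightarrow> real ^ 'n \<Rightarrow> real"
    and dgs dhs :: "real \<Rightarrow> nat \<Rightarrow> real ^ 'n \<Rightarrow> real ^ 'n"
    and \<beta> \<sigma>1 \<sigma>2 \<sigma> \<sigma>' \<eta> :: real
    and x d :: "nat \<Rightarrow> real ^ 'n"
    and \<rho> \<xi> r \<alpha> :: "nat \<Rightarrow> real"
    and W :: "nat \<Rightarrow> real ^ 'n ^ 'n"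
    and lg lp lm :: "nat \<Rightarrow> nat \<Rightarrow> real" and lxi :: "nat \<Rightarrow> real"
  assumes pq: "p \<le> q"
    and lip_f: "loc_lipschitz f"
    and lip_g: "\<forall>i\<in>{1..p}. loc_lipschitz (g i)"
    and lip_h: "\<forall>j\<in>{p+1..q}. loc_lipschitz (h j)"
    and sm_f: "smoothing_family f fs dfs \<and> grad_consistent f dfs"
    and sm_g: "\<forall>i\<in>{1..p}. smoothing_family (g i) (\<lambda>s. gs s i) (\<lambda>s. dgs s i)
                            \<and> grad_consistent (g i) (\<lambda>s. dgs s i)"
    and sm_h: "\<forall>j\<in>{p+1..q}. smoothing_family (h j) (\<lambda>s. hs s j) (\<lambda>s. dhs s j)
                            \<and> grad_consistent (h j) (\<lambda>s. dhs s j)"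
    and params: "0 < \<beta> \<and> \<beta> < 1 \<and> 0 < \<sigma>1 \<and> \<sigma>1 \<le> \<sigma>2 \<and> \<sigma>2 < 1 \<and> 1 < \<sigma> \<and> 1 < \<sigma>' \<and> 1 < \<eta>"
    and init: "\<rho> 0 > 0 \<and> r 0 > 0"
    and W_spd: "\<forall>k. transpose (W k) = W k \<and> (\<forall>v. v \<noteq> 0 \<longrightarrow> v \<bullet> (W k *v v) > 0)"
    and qp_sol: "\<forall>k. qp_feasible p q gs dgs hs dhs (\<rho> k) (x k) (d k) (\<xi> k) \<and>
                   (\<forall>d' \<xi>'. qp_feasible p q gs dgs hs dhs (\<rho> k) (x k) d' \<xi>' \<longrightarrow>
                      qp_obj dfs (\<rho> k) (x k) (W k) (r k) (d k) (\<xi> k) \<le> qp_obj dfs (\<rho> k) (x k) (W k) (r k) d' \<xi>')"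
    and kkt_sign: "\<forall>k. (\<forall>i\<in>{1..p}. lg k i \<ge> 0) \<and> (\<forall>j\<in>{p+1..q}. lp k j \<ge> 0 \<and> lm k j \<ge> 0) \<and> lxi k \<ge> 0"
    and kkt_d: "\<forall>k. dfs (\<rho> k) (x k) + W k *v d k + (\<Sum>i\<in>{1..p}. lg k i *\<^sub>R dgs (\<rho> k) i (x k))
                    + (\<Sum>j\<in>{p+1..q}. (lp k j - lm k j) *\<^sub>R dhs (\<rho> k) j (x k)) = 0"
    and kkt_xi: "\<forall>k. r k = (\<Sum>i\<in>{1..p}. lg k i) + (\<Sum>j\<in>{p+1..q}. lp k j + lm k j) + lxi k"
    and kkt_compl: "\<forall>k. (\<forall>i\<in>{1..p}. lg k i * (gs (\<rho> k) i (x k) + dgs (\<rho> k) i (x k) \<bullet> d k - \<xi> k) = 0) \<and>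
                       (\<forall>j\<in>{p+1..q}. lp k j * (hs (\<rho> k) j (x k) + dhs (\<rho> k) j (x k) \<bullet> d k - \<xi> k) = 0 \<and>
                                      lm k j * (- hs (\<rho> k) j (x k) - dhs (\<rho> k) j (x k) \<bullet> d k - \<xi> k) = 0) \<and>
                       lxi k * \<xi> k = 0"
    and r_upd: "\<forall>k. r (Suc k) = (if \<xi> k = 0 then r k else \<sigma>' * r k)"
    and armijo: "\<forall>k. \<exists>l::nat. \<alpha> k = \<beta> ^ l \<and>
                   theta_s p q fs gs hs (\<rho> k) (r k) (x k + \<beta> ^ l *\<^sub>R d k) - theta_s p q fs gs hs (\<rho> k) (r k) (x k)
                      \<le> - \<sigma>1 * \<beta> ^ l * (d k \<bullet> (W k *v d k)) \<and>
                   (\<forall>l'<l. \<not> (theta_s p q fs gs hs (\<rho> k) (r k) (x k + \<beta> ^ l' *\<^sub>R d k) - theta_s p q fs gs hs (\<rho> k) (r k) (x k)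
                      \<le> - \<sigma>1 * \<beta> ^ l' * (d k \<bullet> (W k *v d k))))"
    and x_upd: "\<forall>k. x (Suc k) = x k + \<alpha> k *\<^sub>R d k"
    and rho_upd: "\<forall>k. \<rho> (Suc k) = (if norm (d k) \<le> \<eta> / \<rho> k then \<sigma> * \<rho> k else \<rho> k)"
  shows
    "(\<forall>k. (\<exists>D. ((\<lambda>t. (theta_s p q fs gs hs (\<rho> k) (r k) (x k + t *\<^sub>R d k)
                        - theta_s p q fs gs hs (\<rho> k) (r k) (x k)) / t) \<longlongrightarrow> D) (at_right 0)
               \<and> D \<le> - (d k \<bullet> (W k *v d k))) \<and>
          ((\<exists>m M. 0 < m \<and> m < M \<and> (\<forall>j v. m * norm v ^ 2 \<le> v \<bullet> (W j *v v) \<and> v \<bullet> (W j *v v) \<le> M * norm v ^ 2))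
            \<and> d k \<noteq> 0 \<longrightarrow>
             (\<exists>\<delta>>0. \<forall>t. 0 < t \<and> t < \<delta> \<longrightarrow>
                 theta_s p q fs gs hs (\<rho> k) (r k) (x k + t *\<^sub>R d k) < theta_s p q fs gs hs (\<rho> k) (r k) (x k)))) \<and>
     ((\<exists>m M. 0 < m \<and> m < M \<and> (\<forall>j v. m * norm v ^ 2 \<le> v \<bullet> (W j *v v) \<and> v \<bullet> (W j *v v) \<le> M * norm v ^ 2)) \<and>
      bounded (range x) \<and>
      (\<exists>B. \<forall>k. (\<forall>i\<in>{1..p}. \<bar>lg k i\<bar> \<le> B) \<and> (\<forall>j\<in>{p+1..q}. \<bar>lp k j\<bar> \<le> B \<and> \<bar>lm k j\<bar> \<le> B) \<and> \<bar>lxi k\<bar> \<le> B) \<and>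
      bounded (range r)
      \<longrightarrow> infinite {k. norm (d k) \<le> \<eta> / \<rho> k} \<and>
          (\<forall>xb s. strict_mono s \<and> (\<forall>k. s k \<in> {k. norm (d k) \<le> \<eta> / \<rho> k}) \<and> (x \<circ> s) \<longlonglongrightarrow> xb
                 \<longrightarrow> clarke_stationary p q f g h xb))"
proof -
  interpret A: alg f g h p q fs dfs gs hs dgs dhs \<beta> \<sigma>1 \<sigma>2 \<sigma> \<sigma>' \<eta> x d \<rho> \<xi> r \<alpha> W lg lp lm lxi
    by (rule alg.intro) (rule assms)+
  show ?thesis
  proof (intro conjI allI impI)
    fix k
    show "\<exists>D. ((\<lambda>t. (theta_s p q fs gs hs (\<rho> k) (r k) (x k + t *\<^sub>R d k)
                        - theta_s p q fs gs hs (\<rho> k) (r k) (x k)) / t) \<longlongrightarrow> D) (at_right 0)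
               \<and> D \<le> - (d k \<bullet> (W k *v d k))" by (rule A.part1)
    assume "(\<exists>m M. 0 < m \<and> m < M \<and> (\<forall>j v. m * norm v ^ 2 \<le> v \<bullet> (W j *v v) \<and> v \<bullet> (W j *v v) \<le> M * norm v ^ 2))
            \<and> d k \<noteq> 0"
    then show "\<exists>\<delta>>0. \<forall>t. 0 < t \<and> t < \<delta> \<longrightarrow>
                 theta_s p q fs gs hs (\<rho> k) (r k) (x k + t *\<^sub>R d k) < theta_s p q fs gs hs (\<rho> k) (r k) (x k)"
      using A.part1b by blast
  next
    assume H: "(\<exists>m M. 0 < m \<and> m < M \<and> (\<forall>j v. m * norm v ^ 2 \<le> v \<bullet> (W j *v v) \<and> v \<bullet> (W j *v v) \<le> M * norm v ^ 2)) \<and>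
      bounded (range x) \<and>
      (\<exists>B. \<forall>k. (\<forall>i\<in>{1..p}. \<bar>lg k i\<bar> \<le> B) \<and> (\<forall>j\<in>{p+1..q}. \<bar>lp k j\<bar> \<le> B \<and> \<bar>lm k j\<bar> \<le> B) \<and> \<bar>lxi k\<bar> \<le> B) \<and>
      bounded (range r)"
    then show "infinite {k. norm (d k) \<le> \<eta> / \<rho> k}" using A.Kinf by blast
  next
    fix xb s
    assume H: "(\<exists>m M. 0 < m \<and> m < M \<and> (\<forall>j v. m * norm v ^ 2 \<le> v \<bullet> (W j *v v) \<and> v \<bullet> (W j *v v) \<le> M * norm v ^ 2)) \<and>
      bounded (range x) \<and>
      (\<exists>B. \<forall>k. (\<forall>i\<in>{1..p}. \<bar>lg k i\<bar> \<le> B) \<and> (\<forall>j\<in>{p+1..q}. \<bar>lp k j\<bar> \<le> B \<and> \<bar>lm k j\<bar> \<le> B) \<and> \<bar>lxi k\<bar> \<le> B) \<and>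
      bounded (range r)"
    assume S: "strict_mono s \<and> (\<forall>k. s k \<in> {k. norm (d k) \<le> \<eta> / \<rho> k}) \<and> (x \<circ> s) \<longlonglongrightarrow> xb"
    show "clarke_stationary p q f g h xb"
      using H S A.stationary by blast
  qed
qed

end
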